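(* Let $m\ge3$, $C$ a set of $m$ candidates, $T$ the set of all $m!$ strict rankings of $C$, and $w=(w_1,\dots,w_m)$ with $1=w_1\ge\cdots\ge w_m=0$; for $t\in T$, $\alpha\in C$ let $\sigma_t(\alpha)=w_i$ where $i$ is the position of $\alpha$ in $t$. Suppose $n$ voters each independently choose a ranking uniformly from $T$, let $N_t$ be the number choosing $t$, and $|\alpha|=\sum_t N_t\sigma_t(\alpha)$. Let $K=2\,m!\,(1-w_{m-1})^{-1}$ if $w_{m-1}<1$ and $K=0$ if $w_{m-1}=1$. On the event that some candidate $a$ has $|a|>|\alpha|$ for all $\alpha\neq a$, define for each $\beta\ne a$ the quantity $Q_3(\beta)$ as the optimal value (or $+\infty$ if infeasible) of the linear program: minimize $\sum_{t\in\bar T_{\beta a}}x_t$ over real $x_t$ ($t\in\bar T_{\beta a}$), $y_t$ ($t\in T_\beta$) subject to $$\sum_{t\in T_\beta}y_t(1-\sigma_t(\alpha))-\sum_{t\in\bar T_{\beta a}}x_t(\sigma_t(\beta)-\sigma_t(\alpha))\ge|\alpha|-|\beta|\quad\forall\alpha\ne\beta,$$ $\sum_{t\in T_\beta}y_t=\sum_{t\in\bar T_{\beta a}}x_t$, $x_t\ge0$, $y_t\ge0$, where $\bar T_{\beta a}$ is the set of types ranking $\beta$ above $a$ and $T_\beta$ the set of types ranking $\beta$ first. Then $$\mathbb{P}\Bigl(\bigl|\mathrm{MCS}-\min_{\beta\ne a}Q_3(\beta)\bigr|\le K\Bigr)\to1\qquad\text{as }n\to\infty,$$ where $\mathrm{MCS}$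 is the minimum manipulating coalition size defined in the context.
   Context: Minimum manipulating coalition size: for a voting situation in which a candidate $a$ has strictly the largest score, a manipulating coalition is a set of voters, all of whom sincerely rank some common candidate $\beta\ne a$ above $a$, such that if these voters replace their sincere rankings by some other rankings (all other voters voting sincerely), the resulting score of $\beta$ is at least the resulting score of every other candidate. $\mathrm{MCS}$ is the minimum number of voters in such a coalition, or $+\infty$ if none exists. The event in the claim is understood to include the existence of such a unique top scorer $a$, and the inequality is regarded as holding when both $\mathrm{MCS}$ and $\min_{\beta\ne a}Q_3(\beta)$ equal $+\infty$. *)

theory Defs
  imports "HOL-Probability.Probability" "HOL-Combinatorics.Multiset_Permutations"
begin

(* Rankings of a candidate set C: lists listing each candidate exactly once
   (first element = top). T = permutations_of_set C, |T| = m!. *)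

definition pos :: "'c list \<Rightarrow> 'c \<Rightarrow> nat" where
  "pos t al = Suc (LEAST i. i < length t \<and> t ! i = al)"

(* sigma_t(alpha) = w_i where i is the position of alpha in t (w indexed 1..m) *)
definition sigma :: "(nat \<Rightarrow> real) \<Rightarrow> 'c list \<Rightarrow> 'c \<Rightarrow> real" where
  "sigma w t al = w (pos t al)"

definition ranks_above :: "'c list \<Rightarrow> 'c \<Rightarrow> 'c \<Rightarrow> bool" where
  "ranks_above t b a \<longleftrightarrow> pos t b < pos t a"

definition profiles :: "'c set \<Rightarrow> nat \<Rightarrow> (nat \<Rightarrow> 'c list) set" where
  "profiles C n = PiE {..<n} (\<lambda>_. permutations_of_set C)"

definition Ncount :: "nat \<Rightarrow> (nat \<Rightarrow> 'c list) \<Rightarrow> 'c list \<Rightarrow> nat" where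
  "Ncount n P t = card {i \<in> {..<n}. P i = t}"

definition score :: "'c set \<Rightarrow> (nat \<Rightarrow> real) \<Rightarrow> nat \<Rightarrow> (nat \<Rightarrow> 'c list) \<Rightarrow> 'c \<Rightarrow> real" where
  "score C w n P al = (\<Sum>t\<in>permutations_of_set C. real (Ncount n P t) * sigma w t al)"

definition manip_coalition ::
  "'c set \<Rightarrow> (nat \<Rightarrow> real) \<Rightarrow> nat \<Rightarrow> (nat \<Rightarrow> 'c list) \<Rightarrow> 'c \<Rightarrow> nat set \<Rightarrow> bool" where
  "manip_coalition C w n P a S \<longleftrightarrow> S \<subseteq> {..<n} \<and>
     (\<exists>b\<in>C. b \<noteq> a \<and> (\<forall>i\<in>S. ranks_above (P i) b a) \<and>
        (\<exists>Q. (\<forall>i<n. Q i \<in> permutations_of_set C) \<and> (\<forall>i<n. i \<notin> S \<longrightarrow> Q i = P i) \<and>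
             (\<forall>al\<in>C. score C w n Q al \<le> score C w n Q b)))"

(* minimum manipulating coalition size, +infinity if none *)
definition MCS :: "'c set \<Rightarrow> (nat \<Rightarrow> real) \<Rightarrow> nat \<Rightarrow> (nat \<Rightarrow> 'c list) \<Rightarrow> 'c \<Rightarrow> ereal" where
  "MCS C w n P a = Inf {ereal (real (card S)) | S. manip_coalition C w n P a S}"

definition T_first :: "'c set \<Rightarrow> 'c \<Rightarrow> 'c list set" where
  "T_first C b = {t \<in> permutations_of_set C. pos t b = 1}"

definition T_above :: "'c set \<Rightarrow> 'c \<Rightarrow> 'c \<Rightarrow> 'c list set" where
  "T_above C b a = {t \<in> permutations_of_set C. ranks_above t b a}"

definition Q3_feasible ::
  "'c set \<Rightarrow> (nat \<Rightarrow> real) \<Rightarrow> nat \<Rightarrow> (nat \<Rightarrow> 'c list) \<Rightarrow> 'c \<Rightarrow> 'c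
     \<Rightarrow> ('c list \<Rightarrow> real) \<Rightarrow> ('c list \<Rightarrow> real) \<Rightarrow> bool" where
  "Q3_feasible C w n P a b x y \<longleftrightarrow>
     (\<forall>al\<in>C. al \<noteq> b \<longrightarrow>
        (\<Sum>t\<in>T_first C b. y t * (1 - sigma w t al))
          - (\<Sum>t\<in>T_above C b a. x t * (sigma w t b - sigma w t al))
          \<ge> score C w n P al - score C w n P b) \<and>
     (\<Sum>t\<in>T_first C b. y t) = (\<Sum>t\<in>T_above C b a. x t) \<and>
     (\<forall>t\<in>T_above C b a. x t \<ge> 0) \<and> (\<forall>t\<in>T_first C b. y t \<ge> 0)"

(* optimal value of the LP, +infinity if infeasible *)
definition Q3 :: "'c set \<Rightarrow> (nat \<Rightarrow> real) \<Rightarrow> nat \<Rightarrow> (nat \<Rightarrow> 'c list) \<Rightarrow> 'c \<Rightarrow> 'c \<Rightarrow> ereal" where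
  "Q3 C w n P a b = Inf {ereal (\<Sum>t\<in>T_above C b a. x t) | x y. Q3_feasible C w n P a b x y}"

definition ereal_close :: "real \<Rightarrow> ereal \<Rightarrow> ereal \<Rightarrow> bool" where
  "ereal_close K X Y \<longleftrightarrow> (X = \<infinity> \<and> Y = \<infinity>) \<or>
     (X \<noteq> \<infinity> \<and> Y \<noteq> \<infinity> \<and> X \<noteq> -\<infinity> \<and> Y \<noteq> -\<infinity> \<and>
      \<bar>real_of_ereal X - real_of_ereal Y\<bar> \<le> K)"

definition Kconst :: "nat \<Rightarrow> (nat \<Rightarrow> real) \<Rightarrow> real" where
  "Kconst m w = (if w (m - 1) < 1 then 2 * fact m / (1 - w (m - 1)) else 0)"

definition good_event :: "'c set \<Rightarrow> (nat \<Rightarrow> real) \<Rightarrow> nat \<Rightarrow> (nat \<Rightarrow> 'c list) set" where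
  "good_event C w n = {P \<in> profiles C n. \<exists>a\<in>C.
      (\<forall>al\<in>C. al \<noteq> a \<longrightarrow> score C w n P al < score C w n P a) \<and>
      ereal_close (Kconst (card C) w) (MCS C w n P a) (Min ((Q3 C w n P a) ` (C - {a})))}"

end

theory Submission
  imports Defs
begin

lemma pos_nth:
  assumes "distinct xs" "k < length xs"
  shows "pos xs (xs ! k) = Suc k"
proof -
  have "(LEAST i. i < length xs \<and> xs ! i = xs ! k) = k"
  proof (rule Least_equality)
    show "k < length xs \<and> xs ! k = xs ! k" using assms by simp
    fix y assume "y < length xs \<and> xs ! y = xs ! k"
    then show "k \<le> y" using assms nth_eq_iff_index_eq by fastforce
  qed
  then show ?thesis unfolding pos_def by simp
qed

lemma pos_eqI:
  assumes "distinct xs" "k < length xs" "xs ! k = al"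
  shows "pos xs al = Suc k"
  using pos_nth[OF assms(1,2)] assms(3) by simp

lemma pos_bounds:
  assumes "distinct xs" "al \<in> set xs"
  shows "1 \<le> pos xs al" "pos xs al \<le> length xs" "xs ! (pos xs al - 1) = al"
proof -
  obtain k where k: "k < length xs" "xs ! k = al" using assms(2) by (auto simp: in_set_conv_nth)
  have "pos xs al = Suc k" using pos_eqI[OF assms(1) k] .
  then show "1 \<le> pos xs al" "pos xs al \<le> length xs" "xs ! (pos xs al - 1) = al" using k by auto
qed

lemma pos_inj:
  assumes "distinct xs" "al \<in> set xs" "be \<in> set xs" "pos xs al = pos xs be"
  shows "al = be"
  using pos_bounds(3)[OF assms(1,2)] pos_bounds(3)[OF assms(1,3)] assms(4) by metis

lemma pos_Cons_same: "pos (a # xs) a = 1"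
proof -
  have "(LEAST i. i < length (a # xs) \<and> (a # xs) ! i = a) = 0" by (rule Least_equality) auto
  then show ?thesis unfolding pos_def by simp
qed

lemma pos_append1:
  assumes "distinct (xs @ ys)" "al \<in> set xs"
  shows "pos (xs @ ys) al = pos xs al"
proof -
  obtain k where k: "k < length xs" "xs ! k = al" using assms(2) by (auto simp: in_set_conv_nth)
  have "pos (xs @ ys) al = Suc k" by (rule pos_eqI) (use assms k in \<open>auto simp: nth_append\<close>)
  moreover have "pos xs al = Suc k" by (rule pos_eqI) (use assms k in auto)
  ultimately show ?thesis by simp
qed

lemma pos_append2:
  assumes "distinct (xs @ ys)" "al \<in> set ys"
  shows "pos (xs @ ys) al = length xs + pos ys al"
proof -
  obtain k where k: "k < length ys" "ys ! k = al" using assms(2) by (auto simp: in_set_conv_nth)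
  have "pos (xs @ ys) al = Suc (length xs + k)" by (rule pos_eqI) (use assms k in \<open>auto simp: nth_append\<close>)
  moreover have "pos ys al = Suc k" by (rule pos_eqI) (use assms k in auto)
  ultimately show ?thesis by simp
qed

lemma pos_Cons_other:
  assumes "distinct (a # xs)" "al \<in> set xs"
  shows "pos (a # xs) al = Suc (pos xs al)"
  using pos_append2[of "[a]" xs al] assms by simp

lemma perm_length: "t \<in> permutations_of_set C \<Longrightarrow> length t = card C"
  by (metis distinct_card permutations_of_setD(1) permutations_of_setD(2))

lemma perm_distinct: "t \<in> permutations_of_set C \<Longrightarrow> distinct t"
  by (simp add: permutations_of_set_def)

lemma perm_set: "t \<in> permutations_of_set C \<Longrightarrow> set t = C"
  by (simp add: permutations_of_set_def)

lemma pos_perm_bounds: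
  assumes "t \<in> permutations_of_set C" "al \<in> C"
  shows "1 \<le> pos t al" "pos t al \<le> card C"
  using pos_bounds[of t al] assms perm_length[OF assms(1)] perm_distinct[OF assms(1)] perm_set[OF assms(1)]
  by auto

definition bfirst :: "'c \<Rightarrow> 'c list \<Rightarrow> 'c list" where
  "bfirst b q = b # remove1 b q"

lemma bfirst_perm:
  assumes "q \<in> permutations_of_set C" "b \<in> C"
  shows "bfirst b q \<in> permutations_of_set C"
  using assms by (auto simp: bfirst_def permutations_of_set_def set_remove1_eq distinct_remove1)

lemma pos_bfirst_b: "pos (bfirst b q) b = 1"
  by (simp add: bfirst_def pos_Cons_same)

lemma pos_bfirst_other:
  assumes "q \<in> permutations_of_set C" "b \<in> C" "al \<in> C" "al \<noteq> b"
  shows "pos q al \<le> pos (bfirst b q) al"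
proof -
  have d: "distinct q" and s: "set q = C" using assms(1) by (auto simp: permutations_of_set_def)
  obtain ys zs where q: "q = ys @ b # zs" using split_list[of b q] assms s by auto
  have rm: "remove1 b q = ys @ zs" using d q by (simp add: remove1_append)
  have dd: "distinct (b # ys @ zs)" using d q by auto
  have alin: "al \<in> set ys \<or> al \<in> set zs" using assms s q by auto
  then show ?thesis
  proof
    assume "al \<in> set ys"
    then have "pos q al = pos ys al" using q d pos_append1 by (metis distinct_append)
    moreover have "pos (bfirst b q) al = Suc (pos (ys @ zs) al)"
      using pos_Cons_other[OF dd] \<open>al \<in> set ys\<close> by (simp add: bfirst_def rm)
    moreover have "pos (ys @ zs) al = pos ys al" using pos_append1[of ys zs al] dd \<open>al \<in> set ys\<close> by simp
    ultimately show ?thesis by simp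
  next
    assume "al \<in> set zs"
    then have "pos q al = length ys + pos (b # zs) al" using q d pos_append2 by (metis list.set_intros(2))
    moreover have "pos (b # zs) al = Suc (pos zs al)" using pos_Cons_other[of b zs al] d q \<open>al \<in> set zs\<close> by simp
    moreover have "pos (bfirst b q) al = Suc (pos (ys @ zs) al)"
      using pos_Cons_other[OF dd] \<open>al \<in> set zs\<close> by (simp add: bfirst_def rm)
    moreover have "pos (ys @ zs) al = length ys + pos zs al" using pos_append2[of ys zs al] dd \<open>al \<in> set zs\<close> by simp
    ultimately show ?thesis by simp
  qed
qed

lemma exists_perm_suffix:
  assumes "finite C" "distinct xs" "set xs \<subseteq> C"
  shows "\<exists>ys. ys @ xs \<in> permutations_of_set C \<and> length ys = card C - length xs"
proof -
  obtain ys where ys: "distinct ys" "set ys = C - set xs"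
    using finite_distinct_list[of "C - set xs"] assms(1) by auto
  have "ys @ xs \<in> permutations_of_set C" using ys assms by (auto simp: permutations_of_set_def)
  moreover have "length ys = card C - length xs"
    using ys assms distinct_card[OF ys(1)] distinct_card[OF assms(2)] card_Diff_subset[of "set xs" C]
    by (metis finite_set)
  ultimately show ?thesis by blast
qed

lemma exists_perm_prefix:
  assumes "finite C" "distinct xs" "set xs \<subseteq> C"
  shows "\<exists>ys. xs @ ys \<in> permutations_of_set C"
proof -
  obtain ys where ys: "distinct ys" "set ys = C - set xs"
    using finite_distinct_list[of "C - set xs"] assms(1) by auto
  have "xs @ ys \<in> permutations_of_set C" using ys assms by (auto simp: permutations_of_set_def)
  then show ?thesis by blast
qed


lemma sum_group_count:
  assumes "finite S" "g ` S \<subseteq> U" "finite U"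
  shows "(\<Sum>i\<in>S. h (g i)) = (\<Sum>u\<in>U. real (card {i\<in>S. g i = u}) * (h u :: real))"
proof -
  have "(\<Sum>i\<in>S. h (g i)) = (\<Sum>u\<in>U. \<Sum>i\<in>{i\<in>S. g i = u}. h (g i))"
    using sum.group[OF assms(1,3,2), of "\<lambda>i. h (g i)"] by simp
  also have "\<dots> = (\<Sum>u\<in>U. \<Sum>i\<in>{i\<in>S. g i = u}. h u)"
    by (intro sum.cong refl) auto
  also have "\<dots> = (\<Sum>u\<in>U. real (card {i\<in>S. g i = u}) * h u)" by simp
  finally show ?thesis .
qed

lemma exists_fiber_map:
  assumes "finite U" "finite S" "(\<Sum>u\<in>U. Y u) = card S"
  shows "\<exists>f. (\<forall>i\<in>S. f i \<in> U) \<and> (\<forall>u\<in>U. card {i\<in>S. f i = u} = Y u)"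
  using assms
proof (induction U arbitrary: S rule: finite_induct)
  case empty
  then show ?case by auto
next
  case (insert u U)
  have "Y u \<le> card S" using insert by simp
  then obtain S1 where S1: "S1 \<subseteq> S" "card S1 = Y u" "finite S1"
    by (meson obtain_subset_with_card_n)
  have "card (S - S1) = (\<Sum>u\<in>U. Y u)" using insert S1 card_Diff_subset[OF S1(3,1)] by simp
  then obtain f where f: "\<forall>i\<in>S - S1. f i \<in> U" "\<forall>v\<in>U. card {i\<in>S - S1. f i = v} = Y v"
    using insert.IH[of "S - S1"] insert.prems by auto
  define g where "g i = (if i \<in> S1 then u else f i)" for i
  have "\<forall>i\<in>S. g i \<in> insert u U" using f by (auto simp: g_def)
  moreover have "card {i\<in>S. g i = v} = Y v" if "v \<in> insert u U" for v
  proof (cases "v = u")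
    case True
    have "{i\<in>S. g i = v} = S1" using True f S1 insert.hyps by (auto simp: g_def)
    then show ?thesis using S1 True by simp
  next
    case False
    then have "v \<in> U" using that by simp
    have "{i\<in>S. g i = v} = {i\<in>S - S1. f i = v}" using False by (auto simp: g_def)
    then show ?thesis using f \<open>v \<in> U\<close> by simp
  qed
  ultimately show ?case by blast
qed

locale vs =
  fixes C :: "'c set" and w :: "nat \<Rightarrow> real"
  assumes finC: "finite C" and m3: "card C \<ge> 3"
    and w1: "w 1 = 1" and wm: "w (card C) = 0"
    and wmono: "\<And>i j. 1 \<le> i \<Longrightarrow> i \<le> j \<Longrightarrow> j \<le> card C \<Longrightarrow> w j \<le> w i"
begin

abbreviation "TT \<equiv> permutations_of_set C"

lemma finite_TT: "finite TT"
  using finC by simp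

lemma TT_ne: "TT \<noteq> {}"
  using finC by simp

lemma w_bounds: "1 \<le> i \<Longrightarrow> i \<le> card C \<Longrightarrow> 0 \<le> w i \<and> w i \<le> 1"
  using wmono[of i "card C"] wmono[of 1 i] w1 wm by auto

lemma sigma_bounds:
  assumes "t \<in> TT" "al \<in> C"
  shows "0 \<le> sigma w t al" "sigma w t al \<le> 1"
  using w_bounds[OF pos_perm_bounds[OF assms]] by (auto simp: sigma_def)

lemma sigma_mono:
  assumes "t \<in> TT" "t' \<in> TT" "al \<in> C" "pos t al \<le> pos t' al"
  shows "sigma w t' al \<le> sigma w t al"
  unfolding sigma_def
  by (rule wmono) (use pos_perm_bounds[OF assms(1,3)] pos_perm_bounds[OF assms(2,3)] assms(4) in auto)

lemma score_voters:
  assumes "\<forall>i<n. P i \<in> TT"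
  shows "score C w n P al = (\<Sum>i<n. sigma w (P i) al)"
proof -
  have "P ` {..<n} \<subseteq> TT" using assms by auto
  from sum_group_count[OF _ this finite_TT, of "\<lambda>t. sigma w t al"]
  show ?thesis unfolding score_def Ncount_def by simp
qed

lemma profiles_TT: "P \<in> profiles C n \<Longrightarrow> i < n \<Longrightarrow> P i \<in> TT"
  by (auto simp: profiles_def)

lemma T_first_sub: "T_first C b \<subseteq> TT" by (auto simp: T_first_def)
lemma T_above_sub: "T_above C b a \<subseteq> TT" by (auto simp: T_above_def)
lemma T_first_above: "T_first C b \<subseteq> T_above C b a" if "a \<in> C" "b \<in> C" "b \<noteq> a"
proof
  fix t assume t: "t \<in> T_first C b"
  then have tt: "t \<in> TT" and p: "pos t b = 1" by (auto simp: T_first_def)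
  have "1 \<le> pos t a" using pos_perm_bounds[OF tt that(1)] by simp
  moreover have "pos t a \<noteq> 1"
  proof
    assume "pos t a = 1"
    then have "pos t a = pos t b" using p by simp
    then show False using pos_inj[OF perm_distinct[OF tt]] perm_set[OF tt] that by auto
  qed
  ultimately show "t \<in> T_above C b a" using tt p by (auto simp: T_above_def ranks_above_def)
qed

lemma finite_T_first: "finite (T_first C b)" using finite_subset[OF T_first_sub finite_TT] .
lemma finite_T_above: "finite (T_above C b a)" using finite_subset[OF T_above_sub finite_TT] .

lemma sigma_first: "t \<in> T_first C b \<Longrightarrow> sigma w t b = 1"
  using w1 by (auto simp: T_first_def sigma_def)

end

context vs begin

lemma score_change:
  assumes P: "\<forall>i<n. P i \<in> TT" and S: "S \<subseteq> {..<n}" and Q: "\<forall>i<n. Q i \<in> TT"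
    and QP: "\<forall>i<n. i \<notin> S \<longrightarrow> Q i = P i"
  shows "score C w n Q al = score C w n P al - (\<Sum>i\<in>S. sigma w (P i) al) + (\<Sum>i\<in>S. sigma w (Q i) al)"
proof -
  have fin: "finite S" using S finite_subset by blast
  have "score C w n Q al = (\<Sum>i<n. sigma w (Q i) al)" by (rule score_voters[OF Q])
  also have "\<dots> = (\<Sum>i\<in>{..<n} - S. sigma w (Q i) al) + (\<Sum>i\<in>S. sigma w (Q i) al)"
    using sum.subset_diff[OF S, of "\<lambda>i. sigma w (Q i) al"] by simp
  also have "(\<Sum>i\<in>{..<n} - S. sigma w (Q i) al) = (\<Sum>i\<in>{..<n} - S. sigma w (P i) al)"
    using QP by (intro sum.cong) auto
  also have "(\<Sum>i\<in>{..<n} - S. sigma w (P i) al) = score C w n P al - (\<Sum>i\<in>S. sigma w (P i) al)"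
    using sum.subset_diff[OF S, of "\<lambda>i. sigma w (P i) al"] score_voters[OF P] by simp
  finally show ?thesis by simp
qed

lemma realize:
  assumes P: "\<forall>i<n. P i \<in> TT" and ab: "a \<in> C" "b \<in> C" "b \<noteq> a"
    and XN: "\<forall>t\<in>T_above C b a. X t \<le> Ncount n P t"
    and sumXY: "(\<Sum>t\<in>T_first C b. Y t) = (\<Sum>t\<in>T_above C b a. X t)"
    and cons: "\<forall>al\<in>C. al \<noteq> b \<longrightarrow>
      (\<Sum>u\<in>T_first C b. real (Y u) * (1 - sigma w u al))
        - (\<Sum>t\<in>T_above C b a. real (X t) * (sigma w t b - sigma w t al))
        \<ge> score C w n P al - score C w n P b"
  shows "\<exists>S. manip_coalition C w n P a S \<and> card S = (\<Sum>t\<in>T_above C b a. X t)"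
proof -
  define TA where "TA = T_above C b a"
  define TF where "TF = T_first C b"
  have finTA: "finite TA" and finTF: "finite TF" using finite_T_above finite_T_first TA_def TF_def by auto
  have "\<forall>t\<in>TA. \<exists>St. St \<subseteq> {i\<in>{..<n}. P i = t} \<and> card St = X t"
  proof
    fix t assume "t \<in> TA"
    then have "X t \<le> card {i\<in>{..<n}. P i = t}" using XN unfolding Ncount_def TA_def by auto
    then obtain St where "St \<subseteq> {i\<in>{..<n}. P i = t}" "card St = X t" by (rule obtain_subset_with_card_n)
    then show "\<exists>St. St \<subseteq> {i\<in>{..<n}. P i = t} \<and> card St = X t" by blast
  qed
  then obtain SS where SS0: "\<forall>t\<in>TA. SS t \<subseteq> {i\<in>{..<n}. P i = t} \<and> card (SS t) = X t"
    by (rule bchoice[elim_format]) blast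
  then have SS: "\<And>t. t \<in> TA \<Longrightarrow> SS t \<subseteq> {i\<in>{..<n}. P i = t} \<and> card (SS t) = X t" by blast
  define S where "S = (\<Union>t\<in>TA. SS t)"
  have Sn: "S \<subseteq> {..<n}" using SS by (auto simp: S_def)
  have finS: "finite S" using Sn finite_subset by blast
  have PS: "\<And>i. i \<in> S \<Longrightarrow> P i \<in> TA" using SS by (auto simp: S_def)
  have SSeq: "{i\<in>S. P i = t} = SS t" if "t \<in> TA" for t
    using SS that by (auto simp: S_def)
  have cardS: "card S = (\<Sum>t\<in>TA. X t)"
  proof -
    have "card S = (\<Sum>t\<in>TA. card (SS t))" unfolding S_def
    proof (rule card_UN_disjoint[OF finTA])
      show "\<forall>i\<in>TA. finite (SS i)"
      proof
        fix t assume "t \<in> TA"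
        then have "SS t \<subseteq> {..<n}" using SS by blast
        then show "finite (SS t)" using finite_subset by blast
      qed
      show "\<forall>i\<in>TA. \<forall>j\<in>TA. i \<noteq> j \<longrightarrow> SS i \<inter> SS j = {}"
      proof (intro ballI impI)
        fix i j assume "i \<in> TA" "j \<in> TA" "i \<noteq> j"
        then show "SS i \<inter> SS j = {}" using SS[of i] SS[of j] by auto
      qed
    qed
    then show ?thesis using SS by simp
  qed
  obtain f where f: "\<forall>i\<in>S. f i \<in> TF" "\<forall>u\<in>TF. card {i\<in>S. f i = u} = Y u"
    using exists_fiber_map[OF finTF finS, of Y] cardS sumXY TA_def TF_def by auto
  define Q where "Q i = (if i \<in> S then f i else P i)" for i
  have QT: "\<forall>i<n. Q i \<in> TT" using P f T_first_sub[of b] TF_def by (auto simp: Q_def)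
  have QP: "\<forall>i<n. i \<notin> S \<longrightarrow> Q i = P i" by (auto simp: Q_def)
  have sc: "score C w n Q al = score C w n P al - (\<Sum>t\<in>TA. real (X t) * sigma w t al)
      + (\<Sum>u\<in>TF. real (Y u) * sigma w u al)" for al
  proof -
    have "(\<Sum>i\<in>S. sigma w (P i) al) = (\<Sum>t\<in>TA. real (card {i\<in>S. P i = t}) * sigma w t al)"
      by (rule sum_group_count[OF finS _ finTA]) (use PS in auto)
    also have "\<dots> = (\<Sum>t\<in>TA. real (X t) * sigma w t al)"
      using SSeq SS by (intro sum.cong) auto
    finally have e1: "(\<Sum>i\<in>S. sigma w (P i) al) = (\<Sum>t\<in>TA. real (X t) * sigma w t al)" .
    have "(\<Sum>i\<in>S. sigma w (Q i) al) = (\<Sum>i\<in>S. sigma w (f i) al)"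
      by (intro sum.cong) (auto simp: Q_def)
    also have "\<dots> = (\<Sum>u\<in>TF. real (card {i\<in>S. f i = u}) * sigma w u al)"
      by (rule sum_group_count[OF finS _ finTF]) (use f in auto)
    also have "\<dots> = (\<Sum>u\<in>TF. real (Y u) * sigma w u al)"
      using f by (intro sum.cong) auto
    finally have e2: "(\<Sum>i\<in>S. sigma w (Q i) al) = (\<Sum>u\<in>TF. real (Y u) * sigma w u al)" .
    show ?thesis using score_change[OF P Sn QT QP, of al] e1 e2 by simp
  qed
  have win: "\<forall>al\<in>C. score C w n Q al \<le> score C w n Q b"
  proof
    fix al assume al: "al \<in> C"
    show "score C w n Q al \<le> score C w n Q b"
    proof (cases "al = b")
      case True then show ?thesis by simp
    next
      case False
      have c: "(\<Sum>u\<in>TF. real (Y u) * (1 - sigma w u al))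
        - (\<Sum>t\<in>TA. real (X t) * (sigma w t b - sigma w t al))
        \<ge> score C w n P al - score C w n P b" using cons al False TA_def TF_def by auto
      have s1: "(\<Sum>u\<in>TF. real (Y u) * (1 - sigma w u al)) = (\<Sum>u\<in>TF. real (Y u) * sigma w u b) - (\<Sum>u\<in>TF. real (Y u) * sigma w u al)"
        using sigma_first TF_def by (simp add: sum_subtractf[symmetric] algebra_simps)
      have s2: "(\<Sum>t\<in>TA. real (X t) * (sigma w t b - sigma w t al)) = (\<Sum>t\<in>TA. real (X t) * sigma w t b) - (\<Sum>t\<in>TA. real (X t) * sigma w t al)"
        by (simp add: sum_subtractf[symmetric] algebra_simps)
      show ?thesis using sc[of al] sc[of b] c s1 s2 by linarith
    qed
  qed
  have "manip_coalition C w n P a S"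
    unfolding manip_coalition_def
  proof (intro conjI bexI[of _ b])
    show "S \<subseteq> {..<n}" by (rule Sn)
    show "b \<noteq> a" by (rule ab(3))
    show "\<forall>i\<in>S. ranks_above (P i) b a" using PS by (auto simp: TA_def T_above_def)
    show "\<exists>Q. (\<forall>i<n. Q i \<in> TT) \<and> (\<forall>i<n. i \<notin> S \<longrightarrow> Q i = P i) \<and> (\<forall>al\<in>C. score C w n Q al \<le> score C w n Q b)"
      using QT QP win by blast
    show "b \<in> C" by (rule ab(2))
  qed
  then show ?thesis using cardS TA_def by auto
qed

lemma relax:
  assumes P: "\<forall>i<n. P i \<in> TT" and ab: "a \<in> C" "b \<in> C" "b \<noteq> a"
    and Sn: "S \<subseteq> {..<n}" and rk: "\<forall>i\<in>S. ranks_above (P i) b a"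
    and QT: "\<forall>i<n. Q i \<in> TT" and QP: "\<forall>i<n. i \<notin> S \<longrightarrow> Q i = P i"
    and win: "\<forall>al\<in>C. score C w n Q al \<le> score C w n Q b"
  shows "Q3 C w n P a b \<le> ereal (real (card S))"
proof -
  define TA where "TA = T_above C b a"
  define TF where "TF = T_first C b"
  have finTA: "finite TA" and finTF: "finite TF" using finite_T_above finite_T_first TA_def TF_def by auto
  have finS: "finite S" using Sn finite_subset by blast
  define x where "x t = real (card {i\<in>S. P i = t})" for t
  define y where "y u = real (card {i\<in>S. bfirst b (Q i) = u})" for u
  have PS: "P i \<in> TA" if "i \<in> S" for i using P rk Sn that by (auto simp: TA_def T_above_def)
  have BQ: "bfirst b (Q i) \<in> TF" if "i \<in> S" for i
    using bfirst_perm[of "Q i" C b] QT Sn that ab pos_bfirst_b[of b "Q i"] by (auto simp: TF_def T_first_def)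
  have sumx: "(\<Sum>t\<in>TA. x t) = real (card S)"
  proof -
    have "P ` S \<subseteq> TA" using PS by auto
    from sum_group_count[OF finS this finTA, of "\<lambda>_. 1"] show ?thesis by (simp add: x_def)
  qed
  have sumy: "(\<Sum>u\<in>TF. y u) = real (card S)"
  proof -
    have "(\<lambda>i. bfirst b (Q i)) ` S \<subseteq> TF" using BQ by auto
    from sum_group_count[OF finS this finTF, of "\<lambda>_. 1"] show ?thesis by (simp add: y_def)
  qed
  have feas: "Q3_feasible C w n P a b x y"
    unfolding Q3_feasible_def
  proof (intro conjI ballI impI)
    show "(\<Sum>t\<in>T_first C b. y t) = (\<Sum>t\<in>T_above C b a. x t)" using sumx sumy TA_def TF_def by simp
    show "\<And>t. t \<in> T_above C b a \<Longrightarrow> 0 \<le> x t" by (simp add: x_def)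
    show "\<And>t. t \<in> T_first C b \<Longrightarrow> 0 \<le> y t" by (simp add: y_def)
    fix al assume al: "al \<in> C" "al \<noteq> b"
    have ex: "(\<Sum>i\<in>S. sigma w (P i) c) = (\<Sum>t\<in>TA. x t * sigma w t c)" for c
    proof -
      have "P ` S \<subseteq> TA" using PS by auto
      from sum_group_count[OF finS this finTA, of "\<lambda>t. sigma w t c"] show ?thesis by (simp add: x_def)
    qed
    have ey: "(\<Sum>i\<in>S. sigma w (bfirst b (Q i)) c) = (\<Sum>u\<in>TF. y u * sigma w u c)" for c
    proof -
      have "(\<lambda>i. bfirst b (Q i)) ` S \<subseteq> TF" using BQ by auto
      from sum_group_count[OF finS this finTF, of "\<lambda>t. sigma w t c"] show ?thesis by (simp add: y_def)
    qed
    have le1: "(\<Sum>i\<in>S. sigma w (bfirst b (Q i)) al) \<le> (\<Sum>i\<in>S. sigma w (Q i) al)"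
    proof (rule sum_mono)
      fix i assume i: "i \<in> S"
      have "Q i \<in> TT" using QT Sn i by auto
      then show "sigma w (bfirst b (Q i)) al \<le> sigma w (Q i) al"
        using sigma_mono[of "Q i" "bfirst b (Q i)" al] bfirst_perm[of "Q i" C b] pos_bfirst_other[of "Q i" C b al] ab al
        by auto
    qed
    have le2: "(\<Sum>i\<in>S. sigma w (Q i) b) \<le> (\<Sum>u\<in>TF. y u * sigma w u b)"
    proof -
      have "(\<Sum>i\<in>S. sigma w (Q i) b) \<le> (\<Sum>i\<in>S. 1)"
        by (rule sum_mono) (use sigma_bounds QT Sn ab in auto)
      also have "\<dots> = (\<Sum>u\<in>TF. y u * sigma w u b)" using sumy sigma_first TF_def by simp
      finally show ?thesis .
    qed
    have s1: "(\<Sum>u\<in>TF. y u * (1 - sigma w u al)) = (\<Sum>u\<in>TF. y u * sigma w u b) - (\<Sum>u\<in>TF. y u * sigma w u al)"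
      using sigma_first TF_def by (simp add: sum_subtractf[symmetric] algebra_simps)
    have s2: "(\<Sum>t\<in>TA. x t * (sigma w t b - sigma w t al)) = (\<Sum>t\<in>TA. x t * sigma w t b) - (\<Sum>t\<in>TA. x t * sigma w t al)"
      by (simp add: sum_subtractf[symmetric] algebra_simps)
    have "score C w n Q al \<le> score C w n Q b" using win al by auto
    then show "score C w n P al - score C w n P b \<le> (\<Sum>t\<in>T_first C b. y t * (1 - sigma w t al)) -
          (\<Sum>t\<in>T_above C b a. x t * (sigma w t b - sigma w t al))"
      using score_change[OF P Sn QT QP, of al] score_change[OF P Sn QT QP, of b] ex[of al] ex[of b] ey[of al] le1 le2 s1 s2
      unfolding TA_def TF_def by linarith
  qed
  have "Q3 C w n P a b \<le> ereal (\<Sum>t\<in>T_above C b a. x t)"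
    unfolding Q3_def by (rule Inf_lower) (use feas in blast)
  then show ?thesis using sumx TA_def by simp
qed

end

lemma nat_decrease:
  assumes "finite U" "N \<le> (\<Sum>u\<in>U. B u)"
  shows "\<exists>Y. (\<forall>u\<in>U. Y u \<le> (B u :: nat)) \<and> (\<Sum>u\<in>U. Y u) = N"
  using assms
proof (induction U arbitrary: N rule: finite_induct)
  case empty then show ?case by auto
next
  case (insert u U)
  show ?case
  proof (cases "N \<le> (\<Sum>v\<in>U. B v)")
    case True
    then obtain Y where Y: "\<forall>v\<in>U. Y v \<le> B v" "(\<Sum>v\<in>U. Y v) = N" using insert.IH by blast
    define Y' where "Y' = Y(u := 0)"
    have "(\<Sum>v\<in>U. Y' v) = (\<Sum>v\<in>U. Y v)" using insert.hyps by (intro sum.cong) (auto simp: Y'_def)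
    then show ?thesis using Y insert.hyps by (intro exI[of _ Y']) (auto simp: Y'_def)
  next
    case False
    define Y' where "Y' = B(u := N - (\<Sum>v\<in>U. B v))"
    have "(\<Sum>v\<in>U. Y' v) = (\<Sum>v\<in>U. B v)" using insert.hyps by (intro sum.cong) (auto simp: Y'_def)
    then show ?thesis using insert False by (intro exI[of _ Y']) (auto simp: Y'_def)
  qed
qed

lemma round_y:
  assumes U: "finite U" "U \<noteq> {}" and y: "\<forall>u\<in>U. 0 \<le> y u" and N: "real N \<le> (\<Sum>u\<in>U. y u)"
  shows "\<exists>Y. (\<Sum>u\<in>U. Y u) = N \<and>
    (\<forall>c. (\<forall>u\<in>U. 0 \<le> c u \<and> c u \<le> 1) \<longrightarrow>
       (\<Sum>u\<in>U. real (Y u) * c u) \<ge> (\<Sum>u\<in>U. y u * c u) - max ((\<Sum>u\<in>U. y u) - real N) (real (card U)))"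
proof -
  define F where "F u = nat (floor (y u))" for u
  have F1: "real (F u) \<le> y u" "y u - real (F u) \<le> 1" if "u \<in> U" for u
    using y that by (auto simp: F_def) linarith+
  show ?thesis
  proof (cases "N \<le> (\<Sum>u\<in>U. F u)")
    case True
    then obtain Y where Y: "\<forall>u\<in>U. Y u \<le> F u" "(\<Sum>u\<in>U. Y u) = N" using nat_decrease[OF U(1)] by blast
    have "(\<Sum>u\<in>U. real (Y u) * c u) \<ge> (\<Sum>u\<in>U. y u * c u) - ((\<Sum>u\<in>U. y u) - real N)"
      if c: "\<forall>u\<in>U. 0 \<le> c u \<and> c u \<le> 1" for c
    proof -
      have "(\<Sum>u\<in>U. y u * c u) - (\<Sum>u\<in>U. real (Y u) * c u) = (\<Sum>u\<in>U. (y u - real (Y u)) * c u)"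
        by (simp add: sum_subtractf[symmetric] algebra_simps)
      also have "\<dots> \<le> (\<Sum>u\<in>U. (y u - real (Y u)))"
      proof (rule sum_mono)
        fix u assume u: "u \<in> U"
        have "real (Y u) \<le> y u" using Y(1) F1 u of_nat_le_iff by (meson order_trans)
        then show "(y u - real (Y u)) * c u \<le> y u - real (Y u)"
          using c u by (simp add: mult_left_le)
      qed
      also have "\<dots> = (\<Sum>u\<in>U. y u) - real N" using Y(2) by (simp add: sum_subtractf flip: of_nat_sum)
      finally show ?thesis by simp
    qed
    then show ?thesis using Y(2) by (intro exI[of _ Y]) force
  next
    case False
    obtain u0 where u0: "u0 \<in> U" using U(2) by blast
    define Y where "Y = F(u0 := F u0 + (N - (\<Sum>u\<in>U. F u)))"
    have sY: "(\<Sum>u\<in>U. Y u) = N"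
    proof -
      have "(\<Sum>u\<in>U. Y u) = (\<Sum>u\<in>U. F u) + (N - (\<Sum>u\<in>U. F u))"
        using u0 U(1) by (simp add: Y_def sum.remove[of U u0] algebra_simps)
      then show ?thesis using False by simp
    qed
    have "(\<Sum>u\<in>U. real (Y u) * c u) \<ge> (\<Sum>u\<in>U. y u * c u) - real (card U)"
      if c: "\<forall>u\<in>U. 0 \<le> c u \<and> c u \<le> 1" for c
    proof -
      have "(\<Sum>u\<in>U. y u * c u) - (\<Sum>u\<in>U. real (Y u) * c u) = (\<Sum>u\<in>U. (y u - real (Y u)) * c u)"
        by (simp add: sum_subtractf[symmetric] algebra_simps)
      also have "\<dots> \<le> (\<Sum>u\<in>U. 1)"
      proof (rule sum_mono)
        fix u assume u: "u \<in> U"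
        have "F u \<le> Y u" by (simp add: Y_def)
        then have "y u - real (Y u) \<le> 1" using F1[OF u] by (meson diff_left_mono of_nat_le_iff order_trans)
        then show "(y u - real (Y u)) * c u \<le> 1"
        proof (cases "y u - real (Y u) \<le> 0")
          case True
          then show ?thesis using c u by (meson mult_nonpos_nonneg order_trans zero_le_one)
        next
          case False
          then have "(y u - real (Y u)) * c u \<le> (y u - real (Y u))" using c u by (simp add: mult_left_le)
          then show ?thesis using \<open>y u - real (Y u) \<le> 1\<close> by linarith
        qed
      qed
      also have "\<dots> = real (card U)" by simp
      finally show ?thesis by simp
    qed
    then show ?thesis using sY by (intro exI[of _ Y]) force
  qed
qed

context vs begin

abbreviation "wp \<equiv> w (card C - 1)"

lemma t0_exists:
  assumes ab: "a \<in> C" "b \<in> C" "b \<noteq> a"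
  obtains t0 where "t0 \<in> TT" "pos t0 b = card C - 1" "pos t0 a = card C"
    "t0 \<in> T_above C b a" "bfirst b t0 \<in> T_first C b"
    "\<And>al. al \<in> C \<Longrightarrow> al \<noteq> b \<Longrightarrow> (1 - sigma w (bfirst b t0) al) - (sigma w t0 b - sigma w t0 al) \<ge> 1 - wp"
proof -
  obtain ys where ys: "ys @ [b, a] \<in> TT" "length ys = card C - 2"
    using exists_perm_suffix[OF finC, of "[b,a]"] ab by auto
  define t0 where "t0 = ys @ [b, a]"
  have d: "distinct (ys @ [b, a])" using ys perm_distinct by blast
  have pb: "pos t0 b = card C - 1"
    using pos_append2[OF d, of b] ys m3 pos_Cons_same[of b "[a]"] by (simp add: t0_def)
  have pa: "pos t0 a = card C"
    using pos_append2[OF d, of a] ys m3 pos_Cons_other[of b "[a]" a] pos_Cons_same[of a "[]"] ab d by (simp add: t0_def)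
  have TA: "t0 \<in> T_above C b a" using pb pa ys m3 by (simp add: T_above_def ranks_above_def t0_def)
  have bT: "bfirst b t0 \<in> TT" using bfirst_perm ys ab by (simp add: t0_def)
  have TF: "bfirst b t0 \<in> T_first C b" using bT pos_bfirst_b by (simp add: T_first_def)
  have gain: "(1 - sigma w (bfirst b t0) al) - (sigma w t0 b - sigma w t0 al) \<ge> 1 - wp"
    if al: "al \<in> C" "al \<noteq> b" for al
  proof -
    have "sigma w (bfirst b t0) al \<le> sigma w t0 al"
      using sigma_mono[of t0 "bfirst b t0" al] pos_bfirst_other[of t0 C b al] ys ab al bT by (simp add: t0_def)
    moreover have "sigma w t0 b = wp" using pb by (simp add: sigma_def)
    ultimately show ?thesis by simp
  qed
  show ?thesis using that[of t0] ys pb pa TA TF gain t0_def by blast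
qed

lemma Q3_nonneg: "Q3 C w n P a b \<ge> 0"
  unfolding Q3_def
proof (rule Inf_greatest)
  fix z assume "z \<in> {ereal (\<Sum>t\<in>T_above C b a. x t) |x y. Q3_feasible C w n P a b x y}"
  then obtain x y where "z = ereal (\<Sum>t\<in>T_above C b a. x t)" "Q3_feasible C w n P a b x y" by blast
  then show "0 \<le> z" by (auto simp: Q3_feasible_def intro!: sum_nonneg)
qed

lemma nonveto_small:
  assumes ab: "a \<in> C" "b \<in> C" "b \<noteq> a" and wp: "wp < 1" and D: "\<Delta> \<ge> 0"
    and g: "\<forall>al\<in>C. score C w n P al - score C w n P b \<le> \<Delta>"
  shows "Q3 C w n P a b \<le> ereal (\<Delta> / (1 - wp))"
proof -
  obtain t0 where t0: "t0 \<in> TT" "t0 \<in> T_above C b a" "bfirst b t0 \<in> T_first C b"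
    "\<And>al. al \<in> C \<Longrightarrow> al \<noteq> b \<Longrightarrow> (1 - sigma w (bfirst b t0) al) - (sigma w t0 b - sigma w t0 al) \<ge> 1 - wp"
    using t0_exists[OF ab] by metis
  define s where "s = \<Delta> / (1 - wp)"
  have s0: "s \<ge> 0" using D wp by (simp add: s_def)
  define x where "x t = (if t = t0 then s else 0)" for t
  define y where "y t = (if t = bfirst b t0 then s else 0)" for t
  have sx: "(\<Sum>t\<in>T_above C b a. x t) = s" using t0 finite_T_above by (simp add: x_def)
  have feas: "Q3_feasible C w n P a b x y"
    unfolding Q3_feasible_def
  proof (intro conjI ballI impI)
    show "(\<Sum>t\<in>T_first C b. y t) = (\<Sum>t\<in>T_above C b a. x t)" using t0 finite_T_above finite_T_first by (simp add: x_def y_def)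
    show "\<And>t. t \<in> T_above C b a \<Longrightarrow> 0 \<le> x t" using s0 by (simp add: x_def)
    show "\<And>t. t \<in> T_first C b \<Longrightarrow> 0 \<le> y t" using s0 by (simp add: y_def)
    fix al assume al: "al \<in> C" "al \<noteq> b"
    have e1: "(\<Sum>t\<in>T_first C b. y t * (1 - sigma w t al)) = s * (1 - sigma w (bfirst b t0) al)"
    proof -
      have "(\<Sum>t\<in>T_first C b. y t * (1 - sigma w t al)) = (\<Sum>t\<in>T_first C b. if t = bfirst b t0 then s * (1 - sigma w t al) else 0)"
        by (intro sum.cong) (auto simp: y_def)
      then show ?thesis using t0 finite_T_first by simp
    qed
    have e2: "(\<Sum>t\<in>T_above C b a. x t * (sigma w t b - sigma w t al)) = s * (sigma w t0 b - sigma w t0 al)"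
    proof -
      have "(\<Sum>t\<in>T_above C b a. x t * (sigma w t b - sigma w t al)) = (\<Sum>t\<in>T_above C b a. if t = t0 then s * (sigma w t b - sigma w t al) else 0)"
        by (intro sum.cong) (auto simp: x_def)
      then show ?thesis using t0 finite_T_above by simp
    qed
    have "s * (1 - wp) \<le> s * ((1 - sigma w (bfirst b t0) al) - (sigma w t0 b - sigma w t0 al))"
      using t0(4)[OF al] s0 by (simp add: mult_left_mono)
    moreover have "s * (1 - wp) = \<Delta>" using wp by (simp add: s_def)
    ultimately show "score C w n P al - score C w n P b \<le> (\<Sum>t\<in>T_first C b. y t * (1 - sigma w t al)) -
       (\<Sum>t\<in>T_above C b a. x t * (sigma w t b - sigma w t al))"
    proof -
      have "score C w n P al - score C w n P b \<le> \<Delta>" using g al by auto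
      moreover have "s * ((1 - sigma w (bfirst b t0) al) - (sigma w t0 b - sigma w t0 al)) =
        s * (1 - sigma w (bfirst b t0) al) - s * (sigma w t0 b - sigma w t0 al)" by (simp add: algebra_simps)
      ultimately show ?thesis using e1 e2 \<open>s * (1 - wp) = \<Delta>\<close>
        \<open>s * (1 - wp) \<le> s * ((1 - sigma w (bfirst b t0) al) - (sigma w t0 b - sigma w t0 al))\<close> by linarith
    qed
  qed
  have "Q3 C w n P a b \<le> ereal (\<Sum>t\<in>T_above C b a. x t)"
    unfolding Q3_def by (rule Inf_lower) (use feas in blast)
  then show ?thesis using sx s_def by simp
qed

lemma card_TA_lt:
  assumes ab: "a \<in> C" "b \<in> C" "b \<noteq> a"
  shows "real (card (T_above C b a)) \<le> real (card TT) - 1"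
proof -
  obtain ys where ys: "[a] @ ys \<in> TT" using exists_perm_prefix[OF finC, of "[a]"] ab by auto
  have "pos ([a] @ ys) a = 1" using pos_Cons_same by simp
  moreover have "1 \<le> pos ([a] @ ys) b" using pos_perm_bounds[OF ys ab(2)] by simp
  ultimately have "[a] @ ys \<notin> T_above C b a" by (auto simp: T_above_def ranks_above_def)
  then have "T_above C b a \<subset> TT" using ys T_above_sub by blast
  then have "card (T_above C b a) < card TT" using finite_TT psubset_card_mono by blast
  then show ?thesis by linarith
qed

lemma sum_plus_delta:
  assumes "finite U" "u0 \<in> U"
  shows "(\<Sum>u\<in>U. (f u + (if u = u0 then k else 0)) * (c u :: real)) = (\<Sum>u\<in>U. f u * c u) + k * c u0"
proof -
  have "(\<Sum>u\<in>U. (f u + (if u = u0 then k else 0)) * c u) = (\<Sum>u\<in>U. f u * c u + (if u = u0 then k * c u else 0))"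
    by (intro sum.cong) (auto simp: algebra_simps)
  also have "\<dots> = (\<Sum>u\<in>U. f u * c u) + k * c u0" using assms by (simp add: sum.distrib)
  finally show ?thesis .
qed

lemma nonveto_coalition:
  assumes P: "\<forall>i<n. P i \<in> TT" and ab: "a \<in> C" "b \<in> C" "b \<noteq> a" and wp: "wp < 1" and D: "\<Delta> \<ge> 0"
    and g: "\<forall>al\<in>C. score C w n P al - score C w n P b \<le> \<Delta>"
    and NL: "\<forall>t\<in>TT. real (Ncount n P t) \<ge> \<Delta> / (1 - wp) + 2 * real (card TT) / (1 - wp) + 2"
  shows "\<exists>S. manip_coalition C w n P a S \<and>
     ereal (real (card S)) \<le> Q3 C w n P a b + ereal (2 * real (card TT) / (1 - wp))"
proof -
  define TA where "TA = T_above C b a"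
  define TF where "TF = T_first C b"
  have finTA: "finite TA" and finTF: "finite TF" using finite_T_above finite_T_first TA_def TF_def by auto
  have wp0: "0 \<le> wp" using w_bounds[of "card C - 1"] m3 by auto
  have pos1: "1 - wp > 0" using wp by simp
  obtain t0 where t0: "t0 \<in> TT" "t0 \<in> TA" "bfirst b t0 \<in> TF"
    "\<And>al. al \<in> C \<Longrightarrow> al \<noteq> b \<Longrightarrow> (1 - sigma w (bfirst b t0) al) - (sigma w t0 b - sigma w t0 al) \<ge> 1 - wp"
    using t0_exists[OF ab] TA_def TF_def by metis
  define u0 where "u0 = bfirst b t0"
  have u0: "u0 \<in> TF" using t0 u0_def by simp
  have Qs: "Q3 C w n P a b \<le> ereal (\<Delta> / (1 - wp))" by (rule nonveto_small[OF ab wp D g])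
  have Q0: "Q3 C w n P a b \<ge> 0" by (rule Q3_nonneg)
  obtain q where q: "Q3 C w n P a b = ereal q" using Qs Q0 by (cases "Q3 C w n P a b") auto
  have qle: "q \<le> \<Delta> / (1 - wp)" using Qs q by simp
  have "Q3 C w n P a b < ereal (q + 1/2)" using q by simp
  then obtain x y where feas: "Q3_feasible C w n P a b x y" and sx: "(\<Sum>t\<in>TA. x t) < q + 1/2"
    unfolding Q3_def Inf_less_iff TA_def by auto
  have x0: "\<forall>t\<in>TA. 0 \<le> x t" and y0: "\<forall>t\<in>TF. 0 \<le> y t" and sxy: "(\<Sum>t\<in>TF. y t) = (\<Sum>t\<in>TA. x t)"
    and cons: "\<And>al. al \<in> C \<Longrightarrow> al \<noteq> b \<Longrightarrow> (\<Sum>t\<in>TF. y t * (1 - sigma w t al))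
          - (\<Sum>t\<in>TA. x t * (sigma w t b - sigma w t al)) \<ge> score C w n P al - score C w n P b"
    using feas unfolding Q3_feasible_def TA_def TF_def by auto
  define X0 where "X0 t = nat (floor (x t))" for t
  have X0b: "real (X0 t) \<le> x t" "x t - real (X0 t) \<le> 1" if "t \<in> TA" for t
    using x0 that by (auto simp: X0_def) linarith+
  define N0 where "N0 = (\<Sum>t\<in>TA. X0 t)"
  have rN0: "real N0 = (\<Sum>t\<in>TA. real (X0 t))" by (simp add: N0_def)
  have r1: "(\<Sum>t\<in>TA. x t) - real N0 \<le> real (card TA)"
  proof -
    have "(\<Sum>t\<in>TA. x t) - real N0 = (\<Sum>t\<in>TA. x t - real (X0 t))" by (simp add: rN0 sum_subtractf)
    also have "\<dots> \<le> (\<Sum>t\<in>TA. 1)" by (rule sum_mono) (use X0b in auto)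
    finally show ?thesis by simp
  qed
  have r0: "real N0 \<le> (\<Sum>t\<in>TA. x t)" unfolding rN0 by (rule sum_mono) (use X0b in auto)
  have TFne: "TF \<noteq> {}" using u0 by auto
  obtain Y0 where Y0: "(\<Sum>u\<in>TF. Y0 u) = N0"
    "\<And>c. (\<forall>u\<in>TF. 0 \<le> c u \<and> c u \<le> 1) \<Longrightarrow>
       (\<Sum>u\<in>TF. real (Y0 u) * c u) \<ge> (\<Sum>u\<in>TF. y u * c u) - max ((\<Sum>u\<in>TF. y u) - real N0) (real (card TF))"
    using round_y[OF finTF TFne y0, of N0] r0 sxy by auto
  have cTF: "card TF \<le> card TA" using T_first_above[OF ab(1,2,3)] finTA TF_def TA_def card_mono by blast
  have cTA: "real (card TA) \<le> real (card TT) - 1" using card_TA_lt[OF ab] TA_def by simp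
  define k where "k = nat (ceiling (2 * real (card TA) / (1 - wp)))"
  have k1: "real k \<ge> 2 * real (card TA) / (1 - wp)" unfolding k_def by linarith
  have k2: "real k \<le> 2 * real (card TA) / (1 - wp) + 1" unfolding k_def using pos1
    by (simp add: of_nat_nat)
  have k3: "real k * (1 - wp) \<ge> 2 * real (card TA)" using k1 pos1 by (simp add: field_simps)
  define X where "X t = X0 t + (if t = t0 then k else 0)" for t
  define Y where "Y u = Y0 u + (if u = u0 then k else 0)" for u
  have sX: "(\<Sum>t\<in>TA. X t) = N0 + k" using t0 finTA by (simp add: X_def N0_def sum.distrib)
  have sY: "(\<Sum>u\<in>TF. Y u) = N0 + k" using u0 finTF Y0 by (simp add: Y_def sum.distrib)
  have XN: "\<forall>t\<in>T_above C b a. X t \<le> Ncount n P t"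
  proof
    fix t assume tA: "t \<in> T_above C b a"
    have "x t \<le> (\<Sum>t\<in>TA. x t)" using member_le_sum[of t TA x] x0 tA finTA TA_def by auto
    then have "real (X0 t) \<le> \<Delta> / (1 - wp) + 1/2" using X0b[of t] tA sx qle TA_def by auto
    moreover have "real k \<le> 2 * real (card TT) / (1 - wp) + 1"
      using k2 cTA pos1 by (smt (verit, del_insts) divide_right_mono)
    ultimately have "real (X t) \<le> \<Delta> / (1 - wp) + 2 * real (card TT) / (1 - wp) + 2"
      by (cases "t = t0") (simp_all add: X_def)
    moreover have "t \<in> TT" using tA T_above_sub by auto
    ultimately have "real (X t) \<le> real (Ncount n P t)" using NL by fastforce
    then show "X t \<le> Ncount n P t" by simp
  qed
  have sumXY: "(\<Sum>t\<in>T_first C b. Y t) = (\<Sum>t\<in>T_above C b a. X t)" using sX sY TA_def TF_def by simp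
  have cons2: "\<forall>al\<in>C. al \<noteq> b \<longrightarrow>
      (\<Sum>u\<in>T_first C b. real (Y u) * (1 - sigma w u al))
        - (\<Sum>t\<in>T_above C b a. real (X t) * (sigma w t b - sigma w t al))
        \<ge> score C w n P al - score C w n P b"
  proof (intro ballI impI)
    fix al assume al: "al \<in> C" "al \<noteq> b"
    define c where "c u = 1 - sigma w u al" for u
    define d where "d t = sigma w t b - sigma w t al" for t
    have cb: "\<forall>u\<in>TF. 0 \<le> c u \<and> c u \<le> 1"
    proof
      fix u assume "u \<in> TF"
      then have "u \<in> TT" using T_first_sub TF_def by auto
      then show "0 \<le> c u \<and> c u \<le> 1" using sigma_bounds[OF _ al(1), of u] by (simp add: c_def)
    qed
    have db: "\<bar>d t\<bar> \<le> 1" if "t \<in> TA" for t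
    proof -
      have "t \<in> TT" using that T_above_sub TA_def by auto
      then show ?thesis using sigma_bounds[OF _ al(1), of t] sigma_bounds[OF _ ab(2), of t] by (simp add: d_def)
    qed
    have eY: "(\<Sum>u\<in>TF. real (Y u) * c u) = (\<Sum>u\<in>TF. real (Y0 u) * c u) + real k * c u0"
    proof -
      have "(\<Sum>u\<in>TF. real (Y u) * c u) = (\<Sum>u\<in>TF. (real (Y0 u) + (if u = u0 then real k else 0)) * c u)"
        by (intro sum.cong) (auto simp: Y_def)
      then show ?thesis using sum_plus_delta[OF finTF u0, of "\<lambda>u. real (Y0 u)" "real k" c] by simp
    qed
    have eX: "(\<Sum>t\<in>TA. real (X t) * d t) = (\<Sum>t\<in>TA. real (X0 t) * d t) + real k * d t0"
    proof -
      have "(\<Sum>u\<in>TA. real (X u) * d u) = (\<Sum>u\<in>TA. (real (X0 u) + (if u = t0 then real k else 0)) * d u)"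
        by (intro sum.cong) (auto simp: X_def)
      then show ?thesis using sum_plus_delta[OF finTA t0(2), of "\<lambda>u. real (X0 u)" "real k" d] by simp
    qed
    have lY: "(\<Sum>u\<in>TF. real (Y0 u) * c u) \<ge> (\<Sum>u\<in>TF. y u * c u) - real (card TA)"
    proof -
      have "max ((\<Sum>u\<in>TF. y u) - real N0) (real (card TF)) \<le> real (card TA)"
        using r1 sxy cTF by simp
      then show ?thesis using Y0(2)[OF cb] by linarith
    qed
    have lX: "(\<Sum>t\<in>TA. real (X0 t) * d t) \<le> (\<Sum>t\<in>TA. x t * d t) + real (card TA)"
    proof -
      have "(\<Sum>t\<in>TA. real (X0 t) * d t) - (\<Sum>t\<in>TA. x t * d t) = (\<Sum>t\<in>TA. (real (X0 t) - x t) * d t)"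
        by (simp add: sum_subtractf[symmetric] algebra_simps)
      also have "\<dots> \<le> (\<Sum>t\<in>TA. 1)"
      proof (rule sum_mono)
        fix t assume t: "t \<in> TA"
        have "\<bar>(real (X0 t) - x t) * d t\<bar> \<le> 1 * 1"
          unfolding abs_mult by (rule mult_mono) (use X0b[OF t] db[OF t] in auto)
        then show "(real (X0 t) - x t) * d t \<le> 1" by simp
      qed
      finally show ?thesis by simp
    qed
    have gain: "c u0 - d t0 \<ge> 1 - wp" using t0(4)[OF al] by (simp add: c_def d_def u0_def)
    have "real k * (c u0 - d t0) \<ge> real k * (1 - wp)" using gain by (simp add: mult_left_mono)
    then have kk: "real k * c u0 - real k * d t0 \<ge> 2 * real (card TA)" using k3 by (simp add: algebra_simps)
    have "(\<Sum>t\<in>TF. y t * c t) - (\<Sum>t\<in>TA. x t * d t) \<ge> score C w n P al - score C w n P b"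
      using cons[OF al] by (simp add: c_def d_def)
    then show "(\<Sum>u\<in>T_first C b. real (Y u) * (1 - sigma w u al))
        - (\<Sum>t\<in>T_above C b a. real (X t) * (sigma w t b - sigma w t al))
        \<ge> score C w n P al - score C w n P b"
    proof -
      have "(\<Sum>u\<in>TF. real (Y u) * c u) - (\<Sum>t\<in>TA. real (X t) * d t) \<ge> score C w n P al - score C w n P b"
        using eY eX lY lX kk \<open>(\<Sum>t\<in>TF. y t * c t) - (\<Sum>t\<in>TA. x t * d t) \<ge> score C w n P al - score C w n P b\<close>
        by linarith
      then show ?thesis by (simp add: c_def d_def TA_def TF_def)
    qed
  qed
  obtain S where S: "manip_coalition C w n P a S" "card S = (\<Sum>t\<in>T_above C b a. X t)"
    using realize[OF P ab XN sumXY cons2] by blast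
  have "real (card S) \<le> q + 2 * real (card TT) / (1 - wp)"
  proof -
    have "real (card S) = real N0 + real k" using S(2) sX TA_def by simp
    also have "\<dots> \<le> q + 1/2 + 2 * real (card TA) / (1 - wp) + 1" using r0 sx k2 by linarith
    finally have a: "real (card S) \<le> q + 3/2 + 2 * real (card TA) / (1 - wp)" by simp
    have "2 * real (card TA) / (1 - wp) \<le> 2 * (real (card TT) - 1) / (1 - wp)"
      using cTA pos1 by (simp add: divide_right_mono)
    also have "2 * (real (card TT) - 1) / (1 - wp) = 2 * real (card TT) / (1 - wp) - 2 / (1 - wp)"
      by (simp add: diff_divide_distrib)
    finally have b: "2 * real (card TA) / (1 - wp) \<le> 2 * real (card TT) / (1 - wp) - 2 / (1 - wp)" .
    have c: "2 / (1 - wp) \<ge> 2" using pos1 wp0 by (simp add: field_simps)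
    show ?thesis using a b c by linarith
  qed
  then show ?thesis using S q by auto
qed

end

lemma sum_sel:
  assumes "finite A" "finite U" "\<forall>al\<in>A. sel al \<in> U"
  shows "(\<Sum>u\<in>U. real (\<Sum>al\<in>A. if u = sel al then e al else 0) * h u) = (\<Sum>al\<in>A. real (e al) * h (sel al))"
proof -
  have "(\<Sum>u\<in>U. real (\<Sum>al\<in>A. if u = sel al then e al else 0) * h u)
      = (\<Sum>u\<in>U. \<Sum>al\<in>A. (if u = sel al then real (e al) * h u else 0))"
    by (simp add: sum_distrib_right of_nat_sum) (intro sum.cong refl, auto)
  also have "\<dots> = (\<Sum>al\<in>A. \<Sum>u\<in>U. (if u = sel al then real (e al) * h u else 0))"
    by (rule sum.swap)
  also have "\<dots> = (\<Sum>al\<in>A. real (e al) * h (sel al))"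
    using assms by (intro sum.cong refl) (simp add: sum.delta')
  finally show ?thesis .
qed

context vs begin

definition lastel :: "'c list \<Rightarrow> 'c" where "lastel t = t ! (card C - 1)"

lemma lastel_iff:
  assumes "t \<in> TT" "al \<in> C"
  shows "pos t al = card C \<longleftrightarrow> al = lastel t"
proof
  assume "pos t al = card C"
  then show "al = lastel t" using pos_bounds(3)[of t al] assms perm_distinct perm_set by (auto simp: lastel_def)
next
  assume "al = lastel t"
  moreover have "card C - 1 < length t" using perm_length[OF assms(1)] m3 by simp
  ultimately show "pos t al = card C" using pos_nth[OF perm_distinct[OF assms(1)]] m3 by (simp add: lastel_def)
qed

lemma lastel_in: "t \<in> TT \<Longrightarrow> lastel t \<in> C"
  using perm_length[of t C] perm_set[of t C] m3 by (auto simp: lastel_def)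

lemma sigma_veto:
  assumes wp: "wp = 1" and t: "t \<in> TT" and al: "al \<in> C"
  shows "sigma w t al = (if pos t al = card C then 0 else 1)"
proof -
  have b: "1 \<le> pos t al" "pos t al \<le> card C" using pos_perm_bounds[OF t al] by auto
  show ?thesis
  proof (cases "pos t al = card C")
    case True then show ?thesis using wm by (simp add: sigma_def)
  next
    case False
    then have "pos t al \<le> card C - 1" using b by simp
    then have "w (card C - 1) \<le> w (pos t al)" using wmono[of "pos t al" "card C - 1"] b by simp
    moreover have "w (pos t al) \<le> 1" using w_bounds b by auto
    ultimately show ?thesis using False wp by (simp add: sigma_def)
  qed
qed

lemma TA_notlast_b:
  assumes "t \<in> T_above C b a" "a \<in> C"
  shows "pos t b \<noteq> card C"
  using assms pos_perm_bounds[of t C a] by (auto simp: T_above_def ranks_above_def)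

lemma veto_lower:
  assumes ab: "a \<in> C" "b \<in> C" "b \<noteq> a" and wp: "wp = 1"
    and feas: "Q3_feasible C w n P a b x y"
  shows "(\<Sum>al\<in>C - {b}. score C w n P al - score C w n P b) \<le> 0"
    "(\<Sum>al\<in>C - {b}. max 0 (score C w n P al - score C w n P b)) \<le> (\<Sum>t\<in>T_above C b a. x t)"
proof -
  define TA where "TA = T_above C b a"
  define TF where "TF = T_first C b"
  have finTA: "finite TA" and finTF: "finite TF" using finite_T_above finite_T_first TA_def TF_def by auto
  define g where "g al = score C w n P al - score C w n P b" for al
  have x0: "\<forall>t\<in>TA. 0 \<le> x t" and y0: "\<forall>t\<in>TF. 0 \<le> y t" and sxy: "(\<Sum>t\<in>TF. y t) = (\<Sum>t\<in>TA. x t)"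
    and cons: "\<And>al. al \<in> C \<Longrightarrow> al \<noteq> b \<Longrightarrow> (\<Sum>t\<in>TF. y t * (1 - sigma w t al))
          - (\<Sum>t\<in>TA. x t * (sigma w t b - sigma w t al)) \<ge> g al"
    using feas unfolding Q3_feasible_def TA_def TF_def g_def by auto
  define Xa where "Xa al = (\<Sum>t\<in>{t\<in>TA. lastel t = al}. x t)" for al
  define Ya where "Ya al = (\<Sum>t\<in>{t\<in>TF. lastel t = al}. y t)" for al
  have TAT: "t \<in> TT" if "t \<in> TA" for t using that T_above_sub TA_def by auto
  have TFT: "t \<in> TT" if "t \<in> TF" for t using that T_first_sub TF_def by auto
  have lastA: "lastel t \<in> C - {b}" if "t \<in> TA" for t
    using lastel_in[OF TAT[OF that]] lastel_iff[OF TAT[OF that] ab(2)] TA_notlast_b[of t b a] that ab TA_def by auto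
  have lastF: "lastel t \<in> C - {b}" if "t \<in> TF" for t
  proof -
    have "pos t b = 1" using that unfolding TF_def T_first_def by auto
    then show ?thesis using lastel_in[OF TFT[OF that]] lastel_iff[OF TFT[OF that] ab(2)] m3 by auto
  qed
  have eY: "(\<Sum>t\<in>TF. y t * (1 - sigma w t al)) = Ya al" if al: "al \<in> C" for al
  proof -
    have "(\<Sum>t\<in>TF. y t * (1 - sigma w t al)) = (\<Sum>t\<in>TF. if lastel t = al then y t else 0)"
      by (intro sum.cong refl) (use sigma_veto[OF wp TFT al] lastel_iff[OF TFT al] in auto)
    then show ?thesis by (simp add: Ya_def sum.inter_filter[OF finTF])
  qed
  have eX: "(\<Sum>t\<in>TA. x t * (sigma w t b - sigma w t al)) = Xa al" if al: "al \<in> C" for al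
  proof -
    have "(\<Sum>t\<in>TA. x t * (sigma w t b - sigma w t al)) = (\<Sum>t\<in>TA. if lastel t = al then x t else 0)"
    proof (intro sum.cong refl)
      fix t assume t: "t \<in> TA"
      have "sigma w t b = 1" using sigma_veto[OF wp TAT[OF t] ab(2)] TA_notlast_b[of t b a] t ab TA_def by auto
      then show "x t * (sigma w t b - sigma w t al) = (if lastel t = al then x t else 0)"
        using sigma_veto[OF wp TAT[OF t] al] lastel_iff[OF TAT[OF t] al] by auto
    qed
    then show ?thesis by (simp add: Xa_def sum.inter_filter[OF finTA])
  qed
  have sX: "(\<Sum>al\<in>C - {b}. Xa al) = (\<Sum>t\<in>TA. x t)"
    unfolding Xa_def using sum.group[OF finTA _ , of "C - {b}" lastel x] lastA finC by auto
  have sY: "(\<Sum>al\<in>C - {b}. Ya al) = (\<Sum>t\<in>TF. y t)"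
    unfolding Ya_def using sum.group[OF finTF _ , of "C - {b}" lastel y] lastF finC by auto
  have c2: "Ya al - Xa al \<ge> g al" if "al \<in> C - {b}" for al using cons[of al] eY[of al] eX[of al] that by auto
  have z: "(\<Sum>al\<in>C - {b}. Ya al - Xa al) = 0" using sX sY sxy by (simp add: sum_subtractf)
  show "(\<Sum>al\<in>C - {b}. score C w n P al - score C w n P b) \<le> 0"
    using sum_mono[of "C - {b}" g "\<lambda>al. Ya al - Xa al"] c2 z unfolding g_def by auto
  have Xa0: "Xa al \<ge> 0" for al unfolding Xa_def by (rule sum_nonneg) (use x0 in auto)
  have Ya0: "Ya al \<ge> 0" for al unfolding Ya_def by (rule sum_nonneg) (use y0 in auto)
  have "(\<Sum>al\<in>C - {b}. max 0 (g al)) \<le> (\<Sum>al\<in>C - {b}. max 0 (Ya al - Xa al))"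
    by (rule sum_mono, rule max.mono) (use c2 in auto)
  also have "(\<Sum>al\<in>C - {b}. max 0 (Ya al - Xa al)) = (\<Sum>al\<in>C - {b}. max 0 (Xa al - Ya al))"
  proof -
    have "(\<Sum>al\<in>C - {b}. max 0 (Ya al - Xa al)) - (\<Sum>al\<in>C - {b}. max 0 (Xa al - Ya al))
      = (\<Sum>al\<in>C - {b}. Ya al - Xa al)"
      by (simp add: sum_subtractf[symmetric]) (intro sum.cong refl, simp add: max_def)
    then show ?thesis using z by simp
  qed
  also have "\<dots> \<le> (\<Sum>al\<in>C - {b}. Xa al)" by (rule sum_mono) (use Ya0 Xa0 in auto)
  finally show "(\<Sum>al\<in>C - {b}. max 0 (score C w n P al - score C w n P b)) \<le> (\<Sum>t\<in>T_above C b a. x t)"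
    using sX unfolding g_def TA_def by simp
qed

lemma veto_types:
  assumes ab: "a \<in> C" "b \<in> C" "b \<noteq> a" and al: "al \<in> C" "al \<noteq> b"
  shows "\<exists>t\<in>T_above C b a. pos t al = card C" "\<exists>u\<in>T_first C b. pos u al = card C"
proof -
  show "\<exists>t\<in>T_above C b a. pos t al = card C"
  proof (cases "al = a")
    case True
    obtain ys where ys: "ys @ [b, a] \<in> TT" "length ys = card C - 2"
      using exists_perm_suffix[OF finC, of "[b,a]"] ab by auto
    have d: "distinct (ys @ [b, a])" using ys perm_distinct by blast
    have pb: "pos (ys @ [b, a]) b = card C - 1"
      using pos_eqI[OF d, of "length ys" b] ys m3 by (simp add: nth_append)
    have pa: "pos (ys @ [b, a]) a = card C"
      using pos_eqI[OF d, of "Suc (length ys)" a] ys m3 by (simp add: nth_append)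
    show ?thesis using ys pb pa m3 True by (intro bexI[of _ "ys @ [b, a]"]) (auto simp: T_above_def ranks_above_def)
  next
    case False
    obtain ys where ys: "ys @ [b, a, al] \<in> TT" "length ys = card C - 3"
      using exists_perm_suffix[OF finC, of "[b,a,al]"] ab al False by auto
    have d: "distinct (ys @ [b, a, al])" using ys perm_distinct by blast
    have pb: "pos (ys @ [b, a, al]) b = card C - 2"
      using pos_eqI[OF d, of "length ys" b] ys m3 by (simp add: nth_append)
    have pa: "pos (ys @ [b, a, al]) a = card C - 1"
      using pos_eqI[OF d, of "Suc (length ys)" a] ys m3 by (simp add: nth_append)
    have pal: "pos (ys @ [b, a, al]) al = card C"
      using pos_eqI[OF d, of "Suc (Suc (length ys))" al] ys m3 by (simp add: nth_append)
    show ?thesis using ys pb pa pal m3 by (intro bexI[of _ "ys @ [b, a, al]"]) (auto simp: T_above_def ranks_above_def)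
  qed
  show "\<exists>u\<in>T_first C b. pos u al = card C"
  proof -
    obtain ys where ys: "ys @ [al] \<in> TT" "length ys = card C - 1"
      using exists_perm_suffix[OF finC, of "[al]"] al by auto
    have d: "distinct (ys @ [al])" using ys perm_distinct by blast
    have pal: "pos (ys @ [al]) al = card C"
      using pos_eqI[OF d, of "length ys" al] ys m3 by (simp add: nth_append)
    define u where "u = bfirst b (ys @ [al])"
    have uT: "u \<in> TT" using bfirst_perm[OF ys(1) ab(2)] u_def by simp
    have "pos u al \<ge> card C" using pos_bfirst_other[OF ys(1) ab(2) al] pal u_def by simp
    moreover have "pos u al \<le> card C" using pos_perm_bounds[OF uT al(1)] by simp
    ultimately have "pos u al = card C" by simp
    moreover have "u \<in> T_first C b" using uT pos_bfirst_b u_def by (simp add: T_first_def)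
    ultimately show ?thesis by blast
  qed
qed

lemma score_Ints:
  assumes wp: "wp = 1" and P: "\<forall>i<n. P i \<in> TT" and al: "al \<in> C"
  shows "score C w n P al \<in> \<int>"
  unfolding score_voters[OF P] by (rule Ints_sum) (use sigma_veto[OF wp _ al] P in auto)

lemma veto_coalition:
  assumes P: "\<forall>i<n. P i \<in> TT" and ab: "a \<in> C" "b \<in> C" "b \<noteq> a" and wp: "wp = 1"
    and sg: "(\<Sum>al\<in>C - {b}. score C w n P al - score C w n P b) \<le> 0"
    and D: "\<forall>al\<in>C. score C w n P b - score C w n P al \<le> \<Delta>"
    and NL: "\<forall>t\<in>TT. real (Ncount n P t) \<ge> \<Delta>"
  shows "\<exists>S. manip_coalition C w n P a S \<and>
     real (card S) = (\<Sum>al\<in>C - {b}. max 0 (score C w n P al - score C w n P b))"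
proof -
  define A where "A = C - {b}"
  have finA: "finite A" using finC A_def by simp
  define TA where "TA = T_above C b a"
  define TF where "TF = T_first C b"
  have finTA: "finite TA" and finTF: "finite TF" using finite_T_above finite_T_first TA_def TF_def by auto
  define g where "g al = score C w n P al - score C w n P b" for al
  define gi where "gi al = floor (g al)" for al
  have ggi: "g al = real_of_int (gi al)" if "al \<in> C" for al
  proof -
    have "g al \<in> \<int>" using score_Ints[OF wp P that] score_Ints[OF wp P ab(2)] by (simp add: g_def Ints_diff)
    then show ?thesis by (simp add: gi_def)
  qed
  define e where "e al = nat (gi al)" for al
  define B where "B al = nat (- gi al)" for al
  have GB: "(\<Sum>al\<in>A. e al) \<le> (\<Sum>al\<in>A. B al)"
  proof -
    have "real_of_int (\<Sum>al\<in>A. gi al) = (\<Sum>al\<in>A. g al)" using ggi A_def by simp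
    then have "real_of_int (\<Sum>al\<in>A. gi al) \<le> 0" using sg A_def g_def by simp
    then have "(\<Sum>al\<in>A. gi al) \<le> 0" by linarith
    moreover have "int (\<Sum>al\<in>A. e al) - int (\<Sum>al\<in>A. B al) = (\<Sum>al\<in>A. gi al)"
      by (simp add: e_def B_def sum_subtractf[symmetric]) (intro sum.cong refl, simp)
    ultimately have "int (\<Sum>al\<in>A. e al) \<le> int (\<Sum>al\<in>A. B al)" by linarith
    then show ?thesis by (simp only: of_nat_le_iff)
  qed
  obtain d where d: "\<forall>al\<in>A. d al \<le> B al" "(\<Sum>al\<in>A. d al) = (\<Sum>al\<in>A. e al)"
    using nat_decrease[OF finA GB] by blast
  have "\<forall>al\<in>A. \<exists>t\<in>TA. pos t al = card C" using veto_types(1)[OF ab] A_def TA_def by auto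
  then obtain tsel where tsel: "\<forall>al\<in>A. tsel al \<in> TA \<and> pos (tsel al) al = card C" by metis
  have "\<forall>al\<in>A. \<exists>u\<in>TF. pos u al = card C" using veto_types(2)[OF ab] A_def TF_def by auto
  then obtain usel where usel: "\<forall>al\<in>A. usel al \<in> TF \<and> pos (usel al) al = card C" by metis
  have TAT: "t \<in> TT" if "t \<in> TA" for t using that T_above_sub TA_def by auto
  have TFT: "t \<in> TT" if "t \<in> TF" for t using that T_first_sub TF_def by auto
  define X where "X t = (\<Sum>al\<in>A. if t = tsel al then d al else 0)" for t
  define Y where "Y u = (\<Sum>al\<in>A. if u = usel al then e al else 0)" for u
  have selA: "\<forall>al\<in>A. tsel al \<in> TA" using tsel by auto
  have selF: "\<forall>al\<in>A. usel al \<in> TF" using usel by auto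
  have sX: "real (\<Sum>t\<in>TA. X t) = (\<Sum>al\<in>A. real (d al))"
    using sum_sel[OF finA finTA selA, of d "\<lambda>_. 1"] by (simp add: X_def)
  have sY: "real (\<Sum>t\<in>TF. Y t) = (\<Sum>al\<in>A. real (e al))"
    using sum_sel[OF finA finTF selF, of e "\<lambda>_. 1"] by (simp add: Y_def)
  have sumXY: "(\<Sum>t\<in>T_first C b. Y t) = (\<Sum>t\<in>T_above C b a. X t)"
  proof -
    have "real (\<Sum>t\<in>TF. Y t) = real (\<Sum>t\<in>TA. X t)" using sX sY d(2)
      by (metis of_nat_sum)
    then have "(\<Sum>t\<in>TF. Y t) = (\<Sum>t\<in>TA. X t)" by (simp only: of_nat_eq_iff)
    then show ?thesis using TA_def TF_def by simp
  qed
  have XN: "\<forall>t\<in>T_above C b a. X t \<le> Ncount n P t"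
  proof
    fix t assume t: "t \<in> T_above C b a"
    have "real (X t) \<le> \<Delta>"
    proof (cases "\<exists>al\<in>A. t = tsel al")
      case True
      then obtain al where al: "al \<in> A" "t = tsel al" by blast
      have "X t = (\<Sum>al'\<in>A. if al' = al then d al' else 0)"
        unfolding X_def
      proof (intro sum.cong refl)
        fix al' assume al': "al' \<in> A"
        have "t = tsel al' \<longleftrightarrow> al' = al"
        proof
          assume "t = tsel al'"
          then have "pos t al' = card C" using tsel al' by auto
          moreover have "pos t al = card C" using tsel al by auto
          ultimately show "al' = al" using lastel_iff[of t al'] lastel_iff[of t al] al al' t T_above_sub A_def by auto
        qed (use al in auto)
        then show "(if t = tsel al' then d al' else 0) = (if al' = al then d al' else 0)" by simp
      qed
      also have "\<dots> = d al" using al finA by simp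
      finally have "X t = d al" .
      moreover have "d al \<le> B al" using d al by auto
      moreover have "real (B al) \<le> \<Delta>"
      proof -
        have h1: "score C w n P b - score C w n P al \<le> \<Delta>" using D al A_def by auto
        have h0: "0 \<le> \<Delta>" using D ab(2) by auto
        have "g al = real_of_int (gi al)" using ggi[of al] al A_def by auto
        then show ?thesis using h1 h0 by (cases "gi al \<ge> 0") (auto simp: B_def g_def)
      qed
      ultimately show ?thesis by simp
    next
      case False
      then have "X t = 0" by (auto simp: X_def intro!: sum.neutral)
      moreover have "\<Delta> \<ge> 0" using D ab by auto
      ultimately show ?thesis by simp
    qed
    moreover have "t \<in> TT" using t T_above_sub by auto
    ultimately show "X t \<le> Ncount n P t" using NL by fastforce
  qed
  have cons: "\<forall>al\<in>C. al \<noteq> b \<longrightarrow>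
      (\<Sum>u\<in>T_first C b. real (Y u) * (1 - sigma w u al))
        - (\<Sum>t\<in>T_above C b a. real (X t) * (sigma w t b - sigma w t al))
        \<ge> score C w n P al - score C w n P b"
  proof (intro ballI impI)
    fix al assume al: "al \<in> C" "al \<noteq> b"
    have alA: "al \<in> A" using al A_def by simp
    have e1: "(\<Sum>u\<in>TF. real (Y u) * (1 - sigma w u al)) = real (e al)"
    proof -
      have "(\<Sum>u\<in>TF. real (Y u) * (1 - sigma w u al)) = (\<Sum>al'\<in>A. real (e al') * (1 - sigma w (usel al') al))"
        using sum_sel[OF finA finTF selF, of e "\<lambda>u. 1 - sigma w u al"] by (simp add: Y_def)
      also have "\<dots> = (\<Sum>al'\<in>A. if al' = al then real (e al') else 0)"
      proof (intro sum.cong refl)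
        fix al' assume al': "al' \<in> A"
        have uT: "usel al' \<in> TT" using usel al' TFT by auto
        have "pos (usel al') al = card C \<longleftrightarrow> al' = al"
          using lastel_iff[OF uT al(1)] lastel_iff[OF uT, of al'] usel al' A_def by auto
        then show "real (e al') * (1 - sigma w (usel al') al) = (if al' = al then real (e al') else 0)"
          using sigma_veto[OF wp uT al(1)] by auto
      qed
      also have "\<dots> = real (e al)" using alA finA by simp
      finally show ?thesis .
    qed
    have e2: "(\<Sum>t\<in>TA. real (X t) * (sigma w t b - sigma w t al)) = real (d al)"
    proof -
      have "(\<Sum>t\<in>TA. real (X t) * (sigma w t b - sigma w t al)) = (\<Sum>al'\<in>A. real (d al') * (sigma w (tsel al') b - sigma w (tsel al') al))"
        using sum_sel[OF finA finTA selA, of d "\<lambda>t. sigma w t b - sigma w t al"] by (simp add: X_def)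
      also have "\<dots> = (\<Sum>al'\<in>A. if al' = al then real (d al') else 0)"
      proof (intro sum.cong refl)
        fix al' assume al': "al' \<in> A"
        have tT: "tsel al' \<in> TT" using tsel al' TAT by auto
        have "pos (tsel al') al = card C \<longleftrightarrow> al' = al"
          using lastel_iff[OF tT al(1)] lastel_iff[OF tT, of al'] tsel al' A_def by auto
        moreover have "sigma w (tsel al') b = 1"
          using sigma_veto[OF wp tT ab(2)] TA_notlast_b[of "tsel al'" b a] tsel al' ab TA_def by auto
        ultimately show "real (d al') * (sigma w (tsel al') b - sigma w (tsel al') al) = (if al' = al then real (d al') else 0)"
          using sigma_veto[OF wp tT al(1)] by auto
      qed
      also have "\<dots> = real (d al)" using alA finA by simp
      finally show ?thesis .
    qed
    have "real (e al) - real (d al) \<ge> g al"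
    proof (cases "gi al \<ge> 0")
      case True
      then have "B al = 0" by (simp add: B_def)
      then have "d al = 0" using d alA by auto
      then show ?thesis using True ggi[OF al(1)] by (simp add: e_def)
    next
      case False
      then have "e al = 0" by (simp add: e_def)
      moreover have "real (d al) \<le> - g al" using d alA ggi[OF al(1)] False by (auto simp: B_def)
      ultimately show ?thesis by simp
    qed
    then show "(\<Sum>u\<in>T_first C b. real (Y u) * (1 - sigma w u al))
        - (\<Sum>t\<in>T_above C b a. real (X t) * (sigma w t b - sigma w t al))
        \<ge> score C w n P al - score C w n P b"
      using e1 e2 by (simp add: TA_def TF_def g_def)
  qed
  obtain S where S: "manip_coalition C w n P a S" "card S = (\<Sum>t\<in>T_above C b a. X t)"
    using realize[OF P ab XN sumXY cons] by blast
  have "real (card S) = (\<Sum>al\<in>A. real (e al))" using S(2) sX d(2) TA_def by (metis of_nat_sum)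
  also have "\<dots> = (\<Sum>al\<in>A. max 0 (g al))"
    by (intro sum.cong refl) (use ggi A_def in \<open>auto simp: e_def max_def\<close>)
  finally show ?thesis using S(1) A_def g_def by auto
qed

end

context vs begin

lemma wp_le1: "wp \<le> 1"
  using w_bounds[of "card C - 1"] m3 by auto

lemma MCS_ge_Min:
  assumes P: "\<forall>i<n. P i \<in> TT" and a: "a \<in> C"
  shows "Min ((Q3 C w n P a) ` (C - {a})) \<le> MCS C w n P a"
  unfolding MCS_def
proof (rule Inf_greatest)
  fix z assume "z \<in> {ereal (real (card S)) |S. manip_coalition C w n P a S}"
  then obtain S where z: "z = ereal (real (card S))" and S: "manip_coalition C w n P a S" by blast
  from S obtain b Q where b: "b \<in> C" "b \<noteq> a" "\<forall>i\<in>S. ranks_above (P i) b a" "S \<subseteq> {..<n}"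
    and Q: "\<forall>i<n. Q i \<in> TT" "\<forall>i<n. i \<notin> S \<longrightarrow> Q i = P i" "\<forall>al\<in>C. score C w n Q al \<le> score C w n Q b"
    unfolding manip_coalition_def by blast
  have "Q3 C w n P a b \<le> z" using relax[OF P a b(1,2) b(4,3) Q] z by simp
  moreover have "Min ((Q3 C w n P a) ` (C - {a})) \<le> Q3 C w n P a b"
    using b finC by (intro Min_le) auto
  ultimately show "Min ((Q3 C w n P a) ` (C - {a})) \<le> z" by simp
qed

lemma MCS_le:
  assumes "manip_coalition C w n P a S"
  shows "MCS C w n P a \<le> ereal (real (card S))"
  unfolding MCS_def by (rule Inf_lower) (use assms in blast)

lemma good_det:
  assumes P: "P \<in> profiles C n"
    and inj: "\<forall>al\<in>C. \<forall>be\<in>C. al \<noteq> be \<longrightarrow> score C w n P al \<noteq> score C w n P be"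
    and gap: "\<forall>al\<in>C. \<forall>be\<in>C. \<bar>score C w n P al - score C w n P be\<bar> \<le> \<Delta>"
    and NL: "\<forall>t\<in>TT. real (Ncount n P t) \<ge>
       (if wp < 1 then \<Delta> / (1 - wp) + 2 * real (card TT) / (1 - wp) + 2 else \<Delta>)"
  shows "P \<in> good_event C w n"
proof -
  have PT: "\<forall>i<n. P i \<in> TT" using P profiles_TT by blast
  have Cne: "C \<noteq> {}" using m3 by auto
  have "Max ((\<lambda>al. score C w n P al) ` C) \<in> (\<lambda>al. score C w n P al) ` C"
    using Max_in[of "(\<lambda>al. score C w n P al) ` C"] finC Cne by auto
  then obtain a where a: "a \<in> C" "score C w n P a = Max ((\<lambda>al. score C w n P al) ` C)"
    by (metis (no_types, lifting) imageE)
  have amax: "\<forall>al\<in>C. al \<noteq> a \<longrightarrow> score C w n P al < score C w n P a"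
  proof (intro ballI impI)
    fix al assume al: "al \<in> C" "al \<noteq> a"
    have "score C w n P al \<le> score C w n P a" using a al finC by simp
    moreover have "score C w n P al \<noteq> score C w n P a" using inj al a(1) by blast
    ultimately show "score C w n P al < score C w n P a" by simp
  qed
  have D0: "\<Delta> \<ge> 0" using gap a by fastforce
  have Ane: "C - {a} \<noteq> {}"
  proof
    assume "C - {a} = {}"
    then have "C \<subseteq> {a}" by auto
    then have "card C \<le> 1" using card_mono[of "{a}" C] by simp
    then show False using m3 by simp
  qed
  have "Min ((Q3 C w n P a) ` (C - {a})) \<in> (Q3 C w n P a) ` (C - {a})"
    using Min_in[of "(Q3 C w n P a) ` (C - {a})"] finC Ane by auto
  then obtain b where b: "b \<in> C - {a}" "Q3 C w n P a b = Min ((Q3 C w n P a) ` (C - {a}))"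
    by (metis (no_types, lifting) imageE)
  have bC: "b \<in> C" "b \<noteq> a" using b by auto
  have geM: "Min ((Q3 C w n P a) ` (C - {a})) \<le> MCS C w n P a" by (rule MCS_ge_Min[OF PT a(1)])
  have gb: "\<forall>al\<in>C. score C w n P al - score C w n P b \<le> \<Delta>" using gap bC by fastforce
  have gb': "\<forall>al\<in>C. score C w n P b - score C w n P al \<le> \<Delta>" using gap bC by fastforce
  have close: "ereal_close (Kconst (card C) w) (MCS C w n P a) (Min ((Q3 C w n P a) ` (C - {a})))"
  proof (cases "wp < 1")
    case True
    have K: "Kconst (card C) w = 2 * real (card TT) / (1 - wp)"
      using True finC by (simp add: Kconst_def)
    have NL': "\<forall>t\<in>TT. real (Ncount n P t) \<ge> \<Delta> / (1 - wp) + 2 * real (card TT) / (1 - wp) + 2"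
      using NL True by simp
    obtain S where S: "manip_coalition C w n P a S"
      "ereal (real (card S)) \<le> Q3 C w n P a b + ereal (2 * real (card TT) / (1 - wp))"
      using nonveto_coalition[OF PT a(1) bC(1) bC(2) True D0 gb NL'] by blast
    have Qs: "Q3 C w n P a b \<le> ereal (\<Delta> / (1 - wp))" by (rule nonveto_small[OF a(1) bC True D0 gb])
    have Q0: "Q3 C w n P a b \<ge> 0" by (rule Q3_nonneg)
    obtain q where q: "Q3 C w n P a b = ereal q" using Qs Q0 by (cases "Q3 C w n P a b") auto
    have M1: "MCS C w n P a \<le> ereal (q + 2 * real (card TT) / (1 - wp))"
    proof -
      have "ereal (real (card S)) \<le> ereal (q + 2 * real (card TT) / (1 - wp))" using S(2) q by simp
      then show ?thesis using MCS_le[OF S(1)] by (meson order_trans)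
    qed
    have M2: "ereal q \<le> MCS C w n P a" using geM b q by simp
    obtain r where r: "MCS C w n P a = ereal r" using M1 M2 by (cases "MCS C w n P a") auto
    show ?thesis unfolding ereal_close_def using r q b M1 M2 K by auto
  next
    case False
    then have wp1: "wp = 1" using wp_le1 by simp
    have K: "Kconst (card C) w = 0" using wp1 by (simp add: Kconst_def)
    show ?thesis
    proof (cases "Q3 C w n P a b = \<infinity>")
      case True
      then have "MCS C w n P a = \<infinity>" using geM b by simp
      then show ?thesis unfolding ereal_close_def using True b by auto
    next
      case False
      then have "{ereal (\<Sum>t\<in>T_above C b a. x t) |x y. Q3_feasible C w n P a b x y} \<noteq> {}"
        unfolding Q3_def by (metis Inf_empty top_ereal_def)
      then obtain x y where feas: "Q3_feasible C w n P a b x y" by blast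
      have sg: "(\<Sum>al\<in>C - {b}. score C w n P al - score C w n P b) \<le> 0"
        using veto_lower(1)[OF a(1) bC(1) bC(2) wp1 feas] .
      have NL': "\<forall>t\<in>TT. real (Ncount n P t) \<ge> \<Delta>" using NL wp1 by simp
      obtain S where S: "manip_coalition C w n P a S"
        "real (card S) = (\<Sum>al\<in>C - {b}. max 0 (score C w n P al - score C w n P b))"
        using veto_coalition[OF PT a(1) bC(1) bC(2) wp1 sg gb' NL'] by blast
      have "ereal (real (card S)) \<le> Q3 C w n P a b"
        unfolding Q3_def
      proof (rule Inf_greatest)
        fix z assume "z \<in> {ereal (\<Sum>t\<in>T_above C b a. x t) |x y. Q3_feasible C w n P a b x y}"
        then obtain x y where "z = ereal (\<Sum>t\<in>T_above C b a. x t)" "Q3_feasible C w n P a b x y" by blast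
        then show "ereal (real (card S)) \<le> z" using veto_lower(2)[OF a(1) bC(1) bC(2) wp1] S(2) by auto
      qed
      then have M1: "MCS C w n P a \<le> Q3 C w n P a b" using MCS_le[OF S(1)] by (meson order_trans)
      have M2: "Q3 C w n P a b \<le> MCS C w n P a" using geM b by simp
      have eq: "MCS C w n P a = Q3 C w n P a b" using M1 M2 by simp
      have Q0: "Q3 C w n P a b \<ge> 0" by (rule Q3_nonneg)
      obtain q where q: "Q3 C w n P a b = ereal q" using False Q0 by (cases "Q3 C w n P a b") auto
      show ?thesis unfolding ereal_close_def using eq q b K by auto
    qed
  qed
  show ?thesis unfolding good_event_def using P a(1) amax close by blast
qed

end

context vs begin

lemma profiles_pmf: "pmf_of_set (profiles C n) = Pi_pmf {..<n} undefined (\<lambda>_. pmf_of_set TT)"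
proof -
  have "PiE_dflt {..<n} undefined (\<lambda>_. TT) = profiles C n"
    by (auto simp: PiE_dflt_def profiles_def PiE_def extensional_def Pi_def)
  then show ?thesis using Pi_pmf_of_set[of "{..<n}" "\<lambda>_. TT" undefined] finite_TT TT_ne by simp
qed

lemma finite_profiles: "finite (profiles C n)"
  unfolding profiles_def using finite_TT by (simp add: finite_PiE)

lemma profiles_ne: "profiles C n \<noteq> {}"
  unfolding profiles_def using TT_ne by (simp add: PiE_eq_empty_iff)

lemma hoeffding_bound:
  fixes f :: "'c list \<Rightarrow> real" and \<epsilon> :: real
  assumes fb: "\<forall>t\<in>TT. \<bar>f t\<bar> \<le> 1" and e: "\<epsilon> > 0" and n: "n > 0"
  shows "measure_pmf.prob (pmf_of_set (profiles C n))
     {P. \<epsilon> * real n \<le> \<bar>(\<Sum>i<n. f (P i)) - real n * ((\<Sum>t\<in>TT. f t) / card TT)\<bar>}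
     \<le> 2 * exp (- (\<epsilon>\<^sup>2 * real n / 2))"
proof -
  define \<mu> where "\<mu> = (\<Sum>t\<in>TT. f t) / card TT"
  define p where "p = Pi_pmf {..<n} undefined (\<lambda>_. pmf_of_set TT)"
  have setp: "set_pmf p = PiE_dflt {..<n} undefined (\<lambda>_. TT)"
    unfolding p_def using set_Pi_pmf[of "{..<n}" undefined "\<lambda>_. pmf_of_set TT"] finite_TT TT_ne
    by (simp add: o_def)
  have E: "measure_pmf.expectation p (\<lambda>P. f (P i)) = \<mu>" if "i < n" for i
  proof -
    have "measure_pmf.expectation p (\<lambda>P. f (P i)) = measure_pmf.expectation (map_pmf (\<lambda>P. P i) p) f"
      by simp
    also have "map_pmf (\<lambda>P. P i) p = pmf_of_set TT"
      unfolding p_def using Pi_pmf_component[of "{..<n}" i undefined "\<lambda>_. pmf_of_set TT"] that by simp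
    also have "measure_pmf.expectation (pmf_of_set TT) f = \<mu>"
      using integral_pmf_of_set[OF TT_ne finite_TT, of f] by (simp add: \<mu>_def)
    finally show ?thesis .
  qed
  interpret H: Hoeffding_ineq "measure_pmf p" "{..<n}" "\<lambda>i P. f (P i)" "\<lambda>_. -1" "\<lambda>_. 1" "real n * \<mu>"
  proof unfold_locales
    show "finite {..<n}" by simp
    show "prob_space.indep_vars (measure_pmf p) (\<lambda>_. borel) (\<lambda>i P. f (P i)) {..<n}"
      unfolding p_def
      by (rule prob_space.indep_vars_compose2[OF prob_space_measure_pmf indep_vars_Pi_pmf]) auto
    fix i assume i: "i \<in> {..<n}"
    show "AE x in measure_pmf p. f (x i) \<in> {-1..1}"
    proof (rule AE_pmfI)
      fix P assume "P \<in> set_pmf p"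
      then have "P i \<in> TT" using i setp by (auto simp: PiE_dflt_def)
      then show "f (P i) \<in> {-1..1}" using fb by (auto simp: abs_le_iff)
    qed
  next
    show "real n * \<mu> \<equiv> \<Sum>i\<in>{..<n}. measure_pmf.expectation p (\<lambda>P. f (P i))"
      using E by simp
  qed
  have "measure_pmf.prob p {x \<in> space (measure_pmf p). \<epsilon> * real n \<le> \<bar>(\<Sum>i\<in>{..<n}. f (x i)) - real n * \<mu>\<bar>}
      \<le> 2 * exp (- 2 * (\<epsilon> * real n)\<^sup>2 / (\<Sum>i\<in>{..<n}. (1 - - 1)\<^sup>2))"
    by (rule H.Hoeffding_ineq_abs_ge) (use e n in auto)
  also have "- 2 * (\<epsilon> * real n)\<^sup>2 / (\<Sum>i\<in>{..<n}. (1 - - 1 :: real)\<^sup>2) = - (\<epsilon>\<^sup>2 * real n / 2)"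
    using n by (simp add: power2_eq_square field_simps)
  finally show ?thesis by (simp add: profiles_pmf p_def \<mu>_def)
qed

lemma LLN:
  fixes f :: "'c list \<Rightarrow> real" and \<epsilon> :: real
  assumes fb: "\<forall>t\<in>TT. \<bar>f t\<bar> \<le> 1" and e: "\<epsilon> > 0"
  shows "(\<lambda>n. measure_pmf.prob (pmf_of_set (profiles C n))
     {P. \<epsilon> * real n \<le> \<bar>(\<Sum>i<n. f (P i)) - real n * ((\<Sum>t\<in>TT. f t) / card TT)\<bar>}) \<longlonglongrightarrow> 0"
proof (rule tendsto_sandwich[of "\<lambda>_. 0" _ sequentially "\<lambda>n. 2 * exp (- (\<epsilon>\<^sup>2 * real n / 2))"])
  show "\<forall>\<^sub>F n in sequentially. 0 \<le> measure_pmf.prob (pmf_of_set (profiles C n))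
     {P. \<epsilon> * real n \<le> \<bar>(\<Sum>i<n. f (P i)) - real n * ((\<Sum>t\<in>TT. f t) / card TT)\<bar>}" by simp
  show "\<forall>\<^sub>F n in sequentially. measure_pmf.prob (pmf_of_set (profiles C n))
     {P. \<epsilon> * real n \<le> \<bar>(\<Sum>i<n. f (P i)) - real n * ((\<Sum>t\<in>TT. f t) / card TT)\<bar>} \<le> 2 * exp (- (\<epsilon>\<^sup>2 * real n / 2))"
    using eventually_gt_at_top[of 0] by eventually_elim (rule hoeffding_bound[OF fb e])
  show "(\<lambda>_. 0) \<longlonglongrightarrow> (0::real)" by simp
  have "filterlim (\<lambda>n. \<epsilon>\<^sup>2 / 2 * real n) at_top sequentially" using e
    by (intro filterlim_tendsto_pos_mult_at_top[OF tendsto_const] filterlim_real_sequentially) auto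
  then have "filterlim (\<lambda>n. - (\<epsilon>\<^sup>2 / 2 * real n)) at_bot sequentially"
    by (simp add: filterlim_uminus_at_bot)
  then have "(\<lambda>n. exp (- (\<epsilon>\<^sup>2 / 2 * real n))) \<longlonglongrightarrow> 0"
    by (rule filterlim_compose[OF exp_at_bot])
  then have "(\<lambda>n. 2 * exp (- (\<epsilon>\<^sup>2 / 2 * real n))) \<longlonglongrightarrow> 2 * 0"
    by (intro tendsto_mult tendsto_const)
  then show "(\<lambda>n. 2 * exp (- (\<epsilon>\<^sup>2 * real n / 2))) \<longlonglongrightarrow> 0" by simp
qed

end

definition swp :: "'c \<Rightarrow> 'c \<Rightarrow> 'c \<Rightarrow> 'c" where
  "swp x y c = (if c = x then y else if c = y then x else c)"

lemma swp_inv [simp]: "swp x y (swp x y c) = c" by (auto simp: swp_def)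
lemma inj_swp: "inj (swp x y)" by (metis injI swp_inv)

definition swl :: "'c \<Rightarrow> 'c \<Rightarrow> 'c list \<Rightarrow> 'c list" where
  "swl x y t = map (swp x y) t"

lemma swl_inv [simp]: "swl x y (swl x y t) = t" by (simp add: swl_def comp_def)

lemma pos_swl:
  assumes "distinct t" "c \<in> set t"
  shows "pos (swl x y t) (swp x y c) = pos t c"
proof -
  obtain k where k: "k < length t" "t ! k = c" using assms(2) by (auto simp: in_set_conv_nth)
  have d: "distinct (swl x y t)" using assms(1) by (simp add: swl_def distinct_map inj_on_subset[OF inj_swp])
  have "pos (swl x y t) (swp x y c) = Suc k" by (rule pos_eqI[OF d]) (use k in \<open>auto simp: swl_def\<close>)
  moreover have "pos t c = Suc k" by (rule pos_eqI[OF assms(1) k])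
  ultimately show ?thesis by simp
qed

lemma prob_mono_prof:
  assumes "\<And>P. P \<in> S \<Longrightarrow> P \<in> A \<Longrightarrow> P \<in> B" "finite S" "S \<noteq> {}"
  shows "measure_pmf.prob (pmf_of_set S) A \<le> measure_pmf.prob (pmf_of_set S) B"
proof -
  have "card (S \<inter> A) \<le> card (S \<inter> B)" using assms by (intro card_mono) auto
  then show ?thesis using assms by (simp add: measure_pmf_of_set divide_right_mono)
qed

context vs begin

lemma swl_TT:
  assumes "x \<in> C" "y \<in> C" "t \<in> TT"
  shows "swl x y t \<in> TT"
proof -
  have "swp x y ` C = C"
  proof
    show "swp x y ` C \<subseteq> C" using assms by (auto simp: swp_def)
    show "C \<subseteq> swp x y ` C" using assms by (auto simp: swp_def image_iff)
  qed
  moreover have "distinct (swl x y t)" using perm_distinct[OF assms(3)]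
    by (simp add: swl_def distinct_map inj_on_subset[OF inj_swp])
  ultimately show ?thesis using perm_set[OF assms(3)] by (simp add: swl_def permutations_of_set_def)
qed

lemma sigma_swl:
  assumes "x \<in> C" "y \<in> C" "t \<in> TT"
  shows "sigma w (swl x y t) y = sigma w t x" "sigma w (swl x y t) x = sigma w t y"
proof -
  have s1: "swp x y x = y" "swp x y y = x" by (auto simp: swp_def)
  have "pos (swl x y t) y = pos t x" using pos_swl[OF perm_distinct[OF assms(3)], of x x y] perm_set[OF assms(3)] assms s1 by simp
  moreover have "pos (swl x y t) x = pos t y" using pos_swl[OF perm_distinct[OF assms(3)], of y x y] perm_set[OF assms(3)] assms s1 by simp
  ultimately show "sigma w (swl x y t) y = sigma w t x" "sigma w (swl x y t) x = sigma w t y" by (auto simp: sigma_def)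
qed

lemma sum_sigma_sym:
  assumes "x \<in> C" "y \<in> C"
  shows "(\<Sum>t\<in>TT. sigma w t x) = (\<Sum>t\<in>TT. sigma w t y)"
proof -
  have bij: "bij_betw (swl x y) TT TT"
    by (rule bij_betwI[of _ _ _ "swl x y"]) (use swl_TT assms in auto)
  have "(\<Sum>t\<in>TT. sigma w t y) = (\<Sum>t\<in>TT. sigma w (swl x y t) y)"
    using sum.reindex_bij_betw[OF bij, of "\<lambda>t. sigma w t y"] by simp
  also have "\<dots> = (\<Sum>t\<in>TT. sigma w t x)" using sigma_swl assms by (intro sum.cong) auto
  finally show ?thesis by simp
qed

lemma gap_small:
  assumes x: "x \<in> C" and y: "y \<in> C" and d: "\<delta> > 0"
  shows "(\<lambda>n. measure_pmf.prob (pmf_of_set (profiles C n))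
     {P. \<delta> * real n < \<bar>score C w n P x - score C w n P y\<bar>}) \<longlonglongrightarrow> 0"
proof -
  define f where "f t = sigma w t x - sigma w t y" for t
  have fb: "\<forall>t\<in>TT. \<bar>f t\<bar> \<le> 1"
  proof
    fix t assume "t \<in> TT"
    then show "\<bar>f t\<bar> \<le> 1" using sigma_bounds[OF _ x, of t] sigma_bounds[OF _ y, of t] by (simp add: f_def abs_le_iff)
  qed
  have m0: "(\<Sum>t\<in>TT. f t) = 0" using sum_sigma_sym[OF x y] by (simp add: f_def sum_subtractf)
  show ?thesis
  proof (rule tendsto_sandwich[OF _ _ tendsto_const LLN[OF fb d]])
    show "\<forall>\<^sub>F n in sequentially. 0 \<le> measure_pmf.prob (pmf_of_set (profiles C n))
     {P. \<delta> * real n < \<bar>score C w n P x - score C w n P y\<bar>}" by simp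
    show "\<forall>\<^sub>F n in sequentially. measure_pmf.prob (pmf_of_set (profiles C n))
     {P. \<delta> * real n < \<bar>score C w n P x - score C w n P y\<bar>} \<le> measure_pmf.prob (pmf_of_set (profiles C n))
     {P. \<delta> * real n \<le> \<bar>(\<Sum>i<n. f (P i)) - real n * ((\<Sum>t\<in>TT. f t) / real (card TT))\<bar>}"
    proof (rule always_eventually, rule allI, rule prob_mono_prof[OF _ finite_profiles profiles_ne])
      fix n P assume P: "P \<in> profiles C n" and "P \<in> {P. \<delta> * real n < \<bar>score C w n P x - score C w n P y\<bar>}"
      moreover have "score C w n P x - score C w n P y = (\<Sum>i<n. f (P i))"
        using score_voters[of n P] P profiles_TT by (simp add: f_def sum_subtractf)
      ultimately show "P \<in> {P. \<delta> * real n \<le> \<bar>(\<Sum>i<n. f (P i)) - real n * ((\<Sum>t\<in>TT. f t) / real (card TT))\<bar>}"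
        using m0 by simp
    qed
  qed
qed

lemma count_large:
  assumes t: "t \<in> TT"
  shows "(\<lambda>n. measure_pmf.prob (pmf_of_set (profiles C n))
     {P. real (Ncount n P t) < real n / (2 * real (card TT))}) \<longlonglongrightarrow> 0"
proof -
  define f where "f u = (if u = t then 1 else 0 :: real)" for u
  have fb: "\<forall>u\<in>TT. \<bar>f u\<bar> \<le> 1" by (simp add: f_def)
  have cTT: "real (card TT) > 0" using finite_TT TT_ne by (simp add: card_gt_0_iff)
  have e: "1 / (2 * real (card TT)) > 0" using cTT by simp
  have m: "(\<Sum>u\<in>TT. f u) = 1" using t finite_TT by (simp add: f_def)
  show ?thesis
  proof (rule tendsto_sandwich[OF _ _ tendsto_const LLN[OF fb e]])
    show "\<forall>\<^sub>F n in sequentially. 0 \<le> measure_pmf.prob (pmf_of_set (profiles C n))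
     {P. real (Ncount n P t) < real n / (2 * real (card TT))}" by simp
    show "\<forall>\<^sub>F n in sequentially. measure_pmf.prob (pmf_of_set (profiles C n))
     {P. real (Ncount n P t) < real n / (2 * real (card TT))} \<le> measure_pmf.prob (pmf_of_set (profiles C n))
     {P. 1 / (2 * real (card TT)) * real n \<le> \<bar>(\<Sum>i<n. f (P i)) - real n * ((\<Sum>t\<in>TT. f t) / real (card TT))\<bar>}"
    proof (rule always_eventually, rule allI, rule prob_mono_prof[OF _ finite_profiles profiles_ne])
      fix n P assume P: "P \<in> profiles C n" and lt: "P \<in> {P. real (Ncount n P t) < real n / (2 * real (card TT))}"
      have N: "real (Ncount n P t) = (\<Sum>i<n. f (P i))"
        unfolding Ncount_def f_def by (simp add: sum.If_cases[OF finite_lessThan] Int_def)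
      have h1: "real n / real (card TT) = 2 * (real n / (2 * real (card TT)))" by simp
      have h2: "1 / (2 * real (card TT)) * real n = real n / (2 * real (card TT))" by simp
      have "real n / real (card TT) - real (Ncount n P t) \<ge> 1 / (2 * real (card TT)) * real n"
      proof -
        have "real (Ncount n P t) < real n / (2 * real (card TT))" using lt by simp
        then show ?thesis using h1 h2 by linarith
      qed
      then show "P \<in> {P. 1 / (2 * real (card TT)) * real n \<le> \<bar>(\<Sum>i<n. f (P i)) - real n * ((\<Sum>t\<in>TT. f t) / real (card TT))\<bar>}"
        using N m by simp
    qed
  qed
qed

end

lemma central_binom_sq:
  "(real ((2 * j) choose j))\<^sup>2 * real (j + 1) \<le> (4 ^ j)\<^sup>2"
proof (induction j)
  case 0 then show ?case by simp
next
  case (Suc j)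
  define B where "B = real ((2 * j) choose j)"
  define B' where "B' = real ((2 * Suc j) choose Suc j)"
  have n1: "(j + 1) * ((2 * j + 1) choose j) = (2 * j + 1) * ((2 * j) choose j)"
    using binomial_absorb_comp[of "2 * j + 1" j] by simp
  have r1: "real (j + 1) * real ((2 * j + 1) choose j) = real (2 * j + 1) * B"
    unfolding B_def of_nat_mult[symmetric] n1 ..
  have n2: "Suc j * (Suc (2 * j + 1) choose Suc j) = Suc (2 * j + 1) * ((2 * j + 1) choose j)"
    by (rule Suc_times_binomial)
  have t2: "2 * Suc j = Suc (2 * j + 1)" by simp
  have r2: "real (Suc j) * B' = real (Suc (2 * j + 1)) * real ((2 * j + 1) choose j)"
    unfolding B'_def t2 of_nat_mult[symmetric] n2 ..
  have r2': "real (j + 1) * B' = real (2 * j + 2) * real ((2 * j + 1) choose j)"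
    using r2 by simp
  have e: "real (j + 1) * B' = 2 * real (2 * j + 1) * B"
  proof -
    have "real (j + 1) * (real (j + 1) * B') = real (j + 1) * (2 * real (2 * j + 1) * B)"
      using r1 r2' by (simp add: algebra_simps del: binomial_Suc_Suc)
    then show ?thesis by simp
  qed
  have IH: "B\<^sup>2 * real (j + 1) \<le> (4 ^ j)\<^sup>2" using Suc.IH by (simp add: B_def)
  have j1: "real (j + 1) > 0" by simp
  have poly: "real (2 * j + 1)^2 * real (j + 2) \<le> 4 * real (j + 1)^3"
    by (simp add: power2_eq_square power3_eq_cube algebra_simps)
  have "B'\<^sup>2 * real (j + 2) * real (j + 1)^3 = 4 * real (2 * j + 1)^2 * real (j + 2) * (B\<^sup>2 * real (j + 1))"
  proof -
    have "(real (j + 1) * B')\<^sup>2 = (2 * real (2 * j + 1) * B)\<^sup>2" using e by simp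
    moreover have "(2 * real (2 * j + 1) * B)\<^sup>2 = 4 * real (2 * j + 1)^2 * B\<^sup>2" by (simp add: power2_eq_square algebra_simps)
    moreover have "(real (j + 1) * B')\<^sup>2 = real (j + 1)^2 * B'\<^sup>2" by (simp add: power2_eq_square algebra_simps)
    ultimately have "real (j + 1)^2 * B'\<^sup>2 = 4 * real (2 * j + 1)^2 * B\<^sup>2" by simp
    moreover have "B'\<^sup>2 * real (j + 2) * real (j + 1)^3 = (real (j + 1)^2 * B'\<^sup>2) * (real (j + 2) * real (j + 1))"
      by (simp add: power2_eq_square power3_eq_cube mult_ac)
    moreover have "4 * real (2 * j + 1)^2 * real (j + 2) * (B\<^sup>2 * real (j + 1)) = (4 * real (2 * j + 1)^2 * B\<^sup>2) * (real (j + 2) * real (j + 1))"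
      by (simp add: mult_ac)
    ultimately show ?thesis by simp
  qed
  also have "\<dots> \<le> 4 * real (2 * j + 1)^2 * real (j + 2) * (4 ^ j)\<^sup>2"
    by (rule mult_left_mono[OF IH]) simp
  also have "\<dots> \<le> 16 * real (j + 1)^3 * (4 ^ j)\<^sup>2"
  proof -
    have "4 * real (2 * j + 1)^2 * real (j + 2) \<le> 16 * real (j + 1)^3" using poly by linarith
    then show ?thesis by (rule mult_right_mono) simp
  qed
  finally have "B'\<^sup>2 * real (j + 2) * real (j + 1)^3 \<le> 16 * (4 ^ j)\<^sup>2 * real (j + 1)^3"
    by (simp add: algebra_simps)
  then have "B'\<^sup>2 * real (j + 2) \<le> 16 * (4 ^ j)\<^sup>2" using j1 by simp
  moreover have "((4::real) ^ Suc j)\<^sup>2 = 16 * (4 ^ j)\<^sup>2" by (simp add: power2_eq_square)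
  ultimately have "B'\<^sup>2 * real (Suc j + 1) \<le> ((4::real) ^ Suc j)\<^sup>2" by simp
  then show ?case by (simp only: B'_def)
qed

definition beta :: "nat \<Rightarrow> real" where
  "beta k = real (k choose (k div 2)) / 2 ^ k"

lemma beta_nonneg: "beta k \<ge> 0" by (simp add: beta_def)
lemma beta_le1: "beta k \<le> 1"
  using binomial_le_pow2[of k "k div 2"] by (simp add: beta_def divide_le_eq_1)

lemma beta_sq: "(beta k)\<^sup>2 * real (k div 2 + 1) \<le> 1"
proof -
  define j where "j = k div 2"
  have cj: "(real ((2 * j) choose j) / 4 ^ j)\<^sup>2 * real (j + 1) \<le> 1"
    using central_binom_sq[of j] by (simp add: power_divide divide_le_eq)
  show ?thesis
  proof (cases "even k")
    case True
    then have k: "k = 2 * j" by (simp add: j_def)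
    have "beta k = real ((2 * j) choose j) / 4 ^ j" by (simp add: beta_def k power_mult)
    then show ?thesis using cj by (simp add: j_def[symmetric])
  next
    case False
    then have k: "k = 2 * j + 1" by (simp add: j_def)
    have n1: "(j + 1) * ((2 * j + 1) choose j) = (2 * j + 1) * ((2 * j) choose j)"
      using binomial_absorb_comp[of "2 * j + 1" j] by simp
    have r1: "real (j + 1) * real ((2 * j + 1) choose j) = real (2 * j + 1) * real ((2 * j) choose j)"
      unfolding of_nat_mult[symmetric] n1 ..
    have kd: "k div 2 = j" by (simp add: j_def)
    have "beta k = real ((2 * j + 1) choose j) / (2 * 4 ^ j)" by (simp add: beta_def k power_mult kd)
    also have "\<dots> = (real (2 * j + 1) / (2 * real (j + 1))) * (real ((2 * j) choose j) / 4 ^ j)"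
    proof -
      have r1': "real ((2*j+1) choose j) = real (2*j+1) * real ((2*j) choose j) / real (j+1)"
        by (subst eq_divide_eq) (use r1 in \<open>simp add: mult.commute del: binomial_Suc_Suc\<close>)
      show ?thesis unfolding r1' by (simp add: field_simps del: binomial_Suc_Suc)
    qed
    finally have bk: "beta k = (real (2 * j + 1) / (2 * real (j + 1))) * (real ((2 * j) choose j) / 4 ^ j)" .
    have f1: "0 \<le> real (2 * j + 1) / (2 * real (j + 1))" "real (2 * j + 1) / (2 * real (j + 1)) \<le> 1"
      by (simp_all add: field_simps)
    have "(beta k)\<^sup>2 \<le> (real ((2 * j) choose j) / 4 ^ j)\<^sup>2"
      unfolding bk power_mult_distrib using f1
      by (intro mult_left_le_one_le) (auto simp: power_le_one)
    then have m: "(beta k)\<^sup>2 * real (j + 1) \<le> (real ((2 * j) choose j) / 4 ^ j)\<^sup>2 * real (j + 1)"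
      by (rule mult_right_mono) simp
    have "(beta k)\<^sup>2 * real (j + 1) \<le> 1" using m cj by linarith
    then show ?thesis using kd by simp
  qed
qed

lemma beta_small:
  assumes "real k \<ge> r" "r > 0"
  shows "beta k \<le> sqrt (2 / r)"
proof (rule real_le_rsqrt)
  have "real (k div 2 + 1) \<ge> r / 2" using assms(1) by linarith
  then have "(beta k)\<^sup>2 * (r / 2) \<le> (beta k)\<^sup>2 * real (k div 2 + 1)" by (rule mult_left_mono) simp
  then have "(beta k)\<^sup>2 * (r / 2) \<le> 1" using beta_sq[of k] by simp
  then show "(beta k)\<^sup>2 \<le> 2 / r" using assms(2) by (simp add: field_simps)
qed


lemma same_card_family:
  assumes "finite G" "F \<subseteq> Pow G" "\<forall>B\<in>F. \<forall>B'\<in>F. card B = card B'"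
  shows "card F \<le> card G choose (card G div 2)"
proof (cases "F = {}")
  case True then show ?thesis by simp
next
  case False
  then obtain B0 where B0: "B0 \<in> F" by blast
  have "F \<subseteq> {B. B \<subseteq> G \<and> card B = card B0}"
  proof
    fix B assume "B \<in> F"
    then show "B \<in> {B. B \<subseteq> G \<and> card B = card B0}" using assms(2) assms(3) B0 by blast
  qed
  moreover have "finite {B. B \<subseteq> G \<and> card B = card B0}" using assms(1) by simp
  ultimately have "card F \<le> card {B. B \<subseteq> G \<and> card B = card B0}"
    by (intro card_mono)
  also have "\<dots> = card G choose card B0" by (rule n_subsets[OF assms(1)])
  also have "\<dots> \<le> card G choose (card G div 2)" by (rule binomial_maximum)
  finally show ?thesis .
qed

lemma subsum_count:
  fixes D :: "nat \<Rightarrow> real"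
  assumes N: "finite N" and G: "G \<subseteq> N" and D1: "\<forall>i\<in>G. D i = 1"
  shows "card {J \<in> Pow N. (\<Sum>i\<in>J. D i) = c} \<le> 2 ^ (card N - card G) * (card G choose (card G div 2))"
proof -
  define R where "R = N - G"
  have finG: "finite G" using N G finite_subset by blast
  have finR: "finite R" using N R_def by simp
  define F where "F J2 = {J1 \<in> Pow G. (\<Sum>i\<in>J1 \<union> J2. D i) = c}" for J2
  have sub: "{J \<in> Pow N. (\<Sum>i\<in>J. D i) = c} \<subseteq> (\<Union>J2\<in>Pow R. (\<lambda>J1. J1 \<union> J2) ` F J2)"
  proof
    fix J assume J: "J \<in> {J \<in> Pow N. (\<Sum>i\<in>J. D i) = c}"
    have e: "(J \<inter> G) \<union> (J - G) = J" by blast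
    then have "J = (J \<inter> G) \<union> (J - G)" by simp
    moreover have "J - G \<in> Pow R" using J by (auto simp: R_def)
    moreover have "J \<inter> G \<in> F (J - G)" using J e by (simp add: F_def)
    ultimately show "J \<in> (\<Union>J2\<in>Pow R. (\<lambda>J1. J1 \<union> J2) ` F J2)" by blast
  qed
  have Fb: "card (F J2) \<le> card G choose (card G div 2)" if J2: "J2 \<in> Pow R" for J2
  proof (rule same_card_family[OF finG])
    show "F J2 \<subseteq> Pow G" by (auto simp: F_def)
    have cardeq: "real (card J1) = c - (\<Sum>i\<in>J2. D i)" if "J1 \<in> F J2" for J1
    proof -
      have J1: "J1 \<subseteq> G" "(\<Sum>i\<in>J1 \<union> J2. D i) = c" using that by (auto simp: F_def)
      have fin1: "finite J1" using J1 finG finite_subset by blast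
      have fin2: "finite J2" using J2 finR finite_subset by auto
      have dis: "J1 \<inter> J2 = {}" using J1 J2 by (auto simp: R_def)
      have "(\<Sum>i\<in>J1 \<union> J2. D i) = (\<Sum>i\<in>J1. D i) + (\<Sum>i\<in>J2. D i)" by (rule sum.union_disjoint[OF fin1 fin2 dis])
      moreover have "(\<Sum>i\<in>J1. D i) = real (card J1)"
      proof -
        have "(\<Sum>i\<in>J1. D i) = (\<Sum>i\<in>J1. 1)" using J1(1) D1 by (intro sum.cong) auto
        then show ?thesis by simp
      qed
      ultimately show ?thesis using J1 by simp
    qed
    show "\<forall>B\<in>F J2. \<forall>B'\<in>F J2. card B = card B'"
      using cardeq by (metis of_nat_eq_iff)
  qed
  have "card {J \<in> Pow N. (\<Sum>i\<in>J. D i) = c} \<le> card (\<Union>J2\<in>Pow R. (\<lambda>J1. J1 \<union> J2) ` F J2)"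
  proof (rule card_mono[OF _ sub])
    have finF: "finite (F J2)" for J2
    proof (rule finite_subset)
      show "F J2 \<subseteq> Pow G" by (auto simp: F_def)
      show "finite (Pow G)" using finG by simp
    qed
    show "finite (\<Union>J2\<in>Pow R. (\<lambda>J1. J1 \<union> J2) ` F J2)"
      by (intro finite_UN_I finite_imageI finF) (simp add: finR)
  qed
  also have "\<dots> \<le> (\<Sum>J2\<in>Pow R. card ((\<lambda>J1. J1 \<union> J2) ` F J2))"
    by (rule card_UN_le) (use finR in simp)
  also have "\<dots> \<le> (\<Sum>J2\<in>Pow R. card G choose (card G div 2))"
  proof (rule sum_mono)
    fix J2 assume J2: "J2 \<in> Pow R"
    have finF: "finite (F J2)"
    proof (rule finite_subset)
      show "F J2 \<subseteq> Pow G" by (auto simp: F_def)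
      show "finite (Pow G)" using finG by simp
    qed
    have "card ((\<lambda>J1. J1 \<union> J2) ` F J2) \<le> card (F J2)" by (rule card_image_le[OF finF])
    then show "card ((\<lambda>J1. J1 \<union> J2) ` F J2) \<le> card G choose (card G div 2)" using Fb[OF J2] by linarith
  qed
  also have "\<dots> = 2 ^ card R * (card G choose (card G div 2))" using finR by (simp add: card_Pow)
  also have "card R = card N - card G" using card_Diff_subset[OF finG G] by (simp add: R_def)
  finally show ?thesis .
qed

lemma card_filter_sum: "finite A \<Longrightarrow> card {x\<in>A. P x} = (\<Sum>x\<in>A. if P x then 1 else 0)"
  by (simp add: sum.If_cases Int_def conj_commute)

definition flip :: "('c list \<Rightarrow> 'c list) \<Rightarrow> nat set \<Rightarrow> (nat \<Rightarrow> 'c list) \<Rightarrow> nat \<Rightarrow> 'c list" where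
  "flip s J P i = (if i \<in> J then s (P i) else P i)"

lemma flip_flip: "(\<And>t. s (s t) = t) \<Longrightarrow> flip s J (flip s J P) = P"
  by (auto simp: flip_def fun_eq_iff)


context vs begin

lemma flip_prof:
  assumes "x \<in> C" "y \<in> C" "P \<in> profiles C n" "J \<subseteq> {..<n}"
  shows "flip (swl x y) J P \<in> profiles C n"
  unfolding profiles_def
proof (rule PiE_I)
  fix i assume i: "i \<in> {..<n}"
  then have "P i \<in> TT" using assms(3) profiles_TT by auto
  then show "flip (swl x y) J P i \<in> TT" using swl_TT[OF assms(1,2)] by (simp add: flip_def)
next
  fix i assume i: "i \<notin> {..<n}"
  then have "i \<notin> J" using assms(4) by auto
  then show "flip (swl x y) J P i = undefined" using assms(3) i by (auto simp: flip_def profiles_def PiE_def extensional_def)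
qed

lemma S_flip:
  assumes x: "x \<in> C" and y: "y \<in> C" and P: "P \<in> profiles C n" and J: "J \<subseteq> {..<n}"
  shows "(\<Sum>i<n. sigma w (flip (swl x y) J P i) x - sigma w (flip (swl x y) J P i) y)
    = (\<Sum>i<n. sigma w (P i) x - sigma w (P i) y) - 2 * (\<Sum>i\<in>J. sigma w (P i) x - sigma w (P i) y)"
proof -
  define Dd where "Dd t = sigma w t x - sigma w t y" for t
  have "(\<Sum>i<n. Dd (flip (swl x y) J P i)) = (\<Sum>i<n. Dd (P i) - (if i \<in> J then 2 * Dd (P i) else 0))"
  proof (intro sum.cong refl)
    fix i assume i: "i \<in> {..<n}"
    have t: "P i \<in> TT" using P profiles_TT i by auto
    show "Dd (flip (swl x y) J P i) = Dd (P i) - (if i \<in> J then 2 * Dd (P i) else 0)"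
      using sigma_swl[OF x y t] by (auto simp: flip_def Dd_def)
  qed
  also have "\<dots> = (\<Sum>i<n. Dd (P i)) - (\<Sum>i<n. if i \<in> J then 2 * Dd (P i) else 0)"
    by (simp add: sum_subtractf)
  also have "(\<Sum>i<n. if i \<in> J then 2 * Dd (P i) else 0) = (\<Sum>i\<in>{..<n} \<inter> J. 2 * Dd (P i))"
    by (simp add: sum.If_cases)
  also have "{..<n} \<inter> J = J" using J by blast
  also have "(\<Sum>i\<in>J. 2 * Dd (P i)) = 2 * (\<Sum>i\<in>J. Dd (P i))" by (simp add: sum_distrib_left)
  finally show ?thesis by (simp add: Dd_def)
qed

lemma anticonc_count:
  assumes x: "x \<in> C" and y: "y \<in> C"
  shows "real (card {P \<in> profiles C n. score C w n P x = score C w n P y})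
    \<le> (\<Sum>P\<in>profiles C n. beta (card {i\<in>{..<n}. sigma w (P i) x - sigma w (P i) y = 1}))"
proof -
  define U where "U = profiles C n"
  define N where "N = {..<n::nat}"
  define Dd where "Dd t = sigma w t x - sigma w t y" for t
  define SS where "SS P = (\<Sum>i<n. Dd (P i))" for P
  define k where "k P = card {i\<in>N. Dd (P i) = 1}" for P
  define fl where "fl J = flip (swl x y) J" for J
  have finU: "finite U" using finite_profiles U_def by simp
  have finN: "finite N" by (simp add: N_def)
  have scoreSS: "score C w n P x - score C w n P y = SS P" if "P \<in> U" for P
    using score_voters[of n P x] score_voters[of n P y] that profiles_TT
    by (simp add: U_def SS_def Dd_def sum_subtractf)
  define Z where "Z = {P\<in>U. SS P = 0}"
  have Zeq: "{P \<in> profiles C n. score C w n P x = score C w n P y} = {P \<in> profiles C n. SS P = 0}"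
  proof (intro Collect_cong conj_cong refl)
    fix P assume "P \<in> profiles C n"
    then have "score C w n P x - score C w n P y = SS P" using scoreSS U_def by simp
    then show "(score C w n P x = score C w n P y) = (SS P = 0)" by linarith
  qed
  have flU: "fl J P \<in> U" if "P \<in> U" "J \<in> Pow N" for P J
    using flip_prof[OF x y, of P n J] that by (auto simp: U_def N_def fl_def)
  have flfl: "fl J (fl J P) = P" for J P unfolding fl_def by (rule flip_flip) simp
  have SSfl: "SS (fl J P) = SS P - 2 * (\<Sum>i\<in>J. Dd (P i))" if "P \<in> U" "J \<in> Pow N" for P J
    using S_flip[OF x y, of P n J] that by (auto simp: U_def N_def fl_def SS_def Dd_def)
  have cz: "card {P\<in>U. SS (fl J P) = 0} = card Z" if J: "J \<in> Pow N" for J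
  proof (rule bij_betw_same_card)
    show "bij_betw (fl J) {P\<in>U. SS (fl J P) = 0} Z"
    proof (rule bij_betwI[where g = "fl J"])
      show "fl J \<in> {P \<in> U. SS (fl J P) = 0} \<rightarrow> Z" using flU J by (auto simp: Z_def)
      show "fl J \<in> Z \<rightarrow> {P \<in> U. SS (fl J P) = 0}" using flU J flfl by (auto simp: Z_def)
      show "\<And>P. P \<in> {P \<in> U. SS (fl J P) = 0} \<Longrightarrow> fl J (fl J P) = P" using flfl by simp
      show "\<And>P. P \<in> Z \<Longrightarrow> fl J (fl J P) = P" using flfl by simp
    qed
  qed
  have e1: "2 ^ n * card Z = (\<Sum>J\<in>Pow N. card {P\<in>U. SS (fl J P) = 0})"
    using cz finN by (simp add: card_Pow N_def)
  also have "\<dots> = (\<Sum>J\<in>Pow N. \<Sum>P\<in>U. if SS (fl J P) = 0 then 1 else 0)"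
    using finU by (simp add: card_filter_sum)
  also have "\<dots> = (\<Sum>P\<in>U. \<Sum>J\<in>Pow N. if SS (fl J P) = 0 then 1 else 0)"
    by (rule sum.swap)
  also have "\<dots> = (\<Sum>P\<in>U. card {J\<in>Pow N. SS (fl J P) = 0})"
  proof (intro sum.cong refl)
    fix P show "(\<Sum>J\<in>Pow N. if SS (fl J P) = 0 then 1 else 0) = card {J\<in>Pow N. SS (fl J P) = 0}"
      using card_filter_sum[of "Pow N" "\<lambda>J. SS (fl J P) = 0"] finN by simp
  qed
  also have "\<dots> \<le> (\<Sum>P\<in>U. 2 ^ (n - k P) * (k P choose (k P div 2)))"
  proof (rule sum_mono)
    fix P assume P: "P \<in> U"
    have "{J\<in>Pow N. SS (fl J P) = 0} = {J\<in>Pow N. (\<Sum>i\<in>J. Dd (P i)) = SS P / 2}"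
      using SSfl[OF P] by auto
    also have "card \<dots> \<le> 2 ^ (card N - card {i\<in>N. Dd (P i) = 1}) * (card {i\<in>N. Dd (P i) = 1} choose (card {i\<in>N. Dd (P i) = 1} div 2))"
      by (rule subsum_count[OF finN]) auto
    finally show "card {J\<in>Pow N. SS (fl J P) = 0} \<le> 2 ^ (n - k P) * (k P choose (k P div 2))"
      by (simp add: k_def N_def)
  qed
  finally have ineq: "2 ^ n * card Z \<le> (\<Sum>P\<in>U. 2 ^ (n - k P) * (k P choose (k P div 2)))" .
  have kn: "k P \<le> n" for P
  proof -
    have "k P \<le> card N" unfolding k_def by (rule card_mono[OF finN]) auto
    then show ?thesis by (simp add: N_def)
  qed
  have conv: "real (2 ^ (n - k P) * (k P choose (k P div 2))) = 2 ^ n * beta (k P)" for P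
  proof -
    have "(2::real) ^ n = 2 ^ (n - k P) * 2 ^ k P" using kn[of P] by (simp flip: power_add)
    then show ?thesis by (simp add: beta_def)
  qed
  have "2 ^ n * real (card Z) \<le> (\<Sum>P\<in>U. 2 ^ n * beta (k P))"
  proof -
    have "real (2 ^ n * card Z) \<le> real (\<Sum>P\<in>U. 2 ^ (n - k P) * (k P choose (k P div 2)))"
      using ineq by (simp only: of_nat_le_iff)
    then show ?thesis using conv by (simp add: of_nat_sum)
  qed
  then have "real (card Z) \<le> (\<Sum>P\<in>U. beta (k P))" by (simp add: sum_distrib_left[symmetric])
  then show ?thesis using Zeq by (simp add: k_def U_def N_def Dd_def Z_def)
qed

end

context vs begin

lemma anticonc:
  assumes x: "x \<in> C" and y: "y \<in> C" and xy: "x \<noteq> y"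
  shows "(\<lambda>n. measure_pmf.prob (pmf_of_set (profiles C n)) {P. score C w n P x = score C w n P y}) \<longlonglongrightarrow> 0"
proof -
  define Dd where "Dd t = sigma w t x - sigma w t y" for t
  define f where "f t = (if Dd t = 1 then 1 else 0 :: real)" for t
  define A1 where "A1 = {t\<in>TT. Dd t = 1}"
  obtain u where u: "u \<in> T_first C x" "pos u y = card C"
    using veto_types(2)[OF y x xy y xy[symmetric]] by blast
  have uT: "u \<in> TT" using u T_first_sub by auto
  have "Dd u = 1" using sigma_first[OF u(1)] u(2) wm by (simp add: Dd_def sigma_def)
  then have "u \<in> A1" using uT by (simp add: A1_def)
  then have A1ne: "card A1 > 0" using finite_TT by (auto simp: A1_def card_gt_0_iff)
  have cTT: "real (card TT) > 0" using finite_TT TT_ne by (simp add: card_gt_0_iff)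
  define \<mu> where "\<mu> = (\<Sum>t\<in>TT. f t) / card TT"
  have sf: "(\<Sum>t\<in>TT. f t) = real (card A1)"
    using finite_TT by (simp add: f_def A1_def sum.If_cases Int_def conj_commute)
  have mu: "\<mu> > 0" using A1ne cTT by (simp add: \<mu>_def sf)
  define r where "r = \<mu> / 2"
  have r: "r > 0" using mu by (simp add: r_def)
  have fb: "\<forall>t\<in>TT. \<bar>f t\<bar> \<le> 1" by (simp add: f_def)
  define E where "E n = {P. r * real n \<le> \<bar>(\<Sum>i<n. f (P i)) - real n * \<mu>\<bar>}" for n
  have LL: "(\<lambda>n. measure_pmf.prob (pmf_of_set (profiles C n)) (E n)) \<longlonglongrightarrow> 0"
    using LLN[OF fb r] by (simp add: E_def \<mu>_def)
  have bound: "measure_pmf.prob (pmf_of_set (profiles C n)) {P. score C w n P x = score C w n P y}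
      \<le> measure_pmf.prob (pmf_of_set (profiles C n)) (E n) + sqrt (2 / (r * real n))" if n: "n > 0" for n
  proof -
    define U where "U = profiles C n"
    have finU: "finite U" and Une: "U \<noteq> {}" using finite_profiles profiles_ne U_def by auto
    have cU: "real (card U) > 0" using finU Une by (simp add: card_gt_0_iff)
    define k where "k P = card {i\<in>{..<n}. Dd (P i) = 1}" for P
    have rn: "r * real n > 0" using r n by simp
    have kf: "real (k P) = (\<Sum>i<n. f (P i))" for P
    proof -
      have "real (k P) = real (\<Sum>i<n. if Dd (P i) = 1 then 1 else 0)"
        unfolding k_def using card_filter_sum[of "{..<n}" "\<lambda>i. Dd (P i) = 1"] by simp
      also have "\<dots> = (\<Sum>i<n. f (P i))" unfolding of_nat_sum by (intro sum.cong refl) (simp add: f_def)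
      finally show ?thesis .
    qed
    have bP: "beta (k P) \<le> (if P \<in> E n then 1 else 0) + sqrt (2 / (r * real n))" for P
    proof (cases "real (k P) \<ge> r * real n")
      case True
      have "beta (k P) \<le> sqrt (2 / (r * real n))" by (rule beta_small[OF True rn])
      moreover have "(if P \<in> E n then 1 else 0 :: real) \<ge> 0" by simp
      ultimately show ?thesis by linarith
    next
      case False
      have m2: "real n * \<mu> = 2 * (r * real n)" by (simp add: r_def)
      have "(\<Sum>i<n. f (P i)) < r * real n" using False kf[of P] by simp
      then have "r * real n \<le> \<bar>(\<Sum>i<n. f (P i)) - real n * \<mu>\<bar>" unfolding m2 by linarith
      then have "P \<in> E n" by (simp add: E_def)
      then have i1: "(if P \<in> E n then 1 else 0::real) = 1" by simp
      have b1: "beta (k P) \<le> 1" by (rule beta_le1)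
      have s0: "sqrt (2 / (r * real n)) \<ge> 0" using rn by simp
      show ?thesis unfolding i1 using b1 s0 by linarith
    qed
    have "measure_pmf.prob (pmf_of_set U) {P. score C w n P x = score C w n P y}
        = real (card {P \<in> U. score C w n P x = score C w n P y}) / real (card U)"
      using finU Une by (simp add: measure_pmf_of_set Int_def)
    also have "\<dots> \<le> (\<Sum>P\<in>U. beta (k P)) / real (card U)"
      using anticonc_count[OF x y, of n] cU by (simp add: U_def k_def Dd_def divide_right_mono)
    also have "\<dots> \<le> (\<Sum>P\<in>U. (if P \<in> E n then 1 else 0) + sqrt (2 / (r * real n))) / real (card U)"
      by (intro divide_right_mono sum_mono bP) simp
    also have "\<dots> = real (card (U \<inter> E n)) / real (card U) + sqrt (2 / (r * real n))"
      using cU finU Une by (simp add: sum.distrib sum.If_cases add_divide_distrib)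
    also have "real (card (U \<inter> E n)) / real (card U) = measure_pmf.prob (pmf_of_set U) (E n)"
      using finU Une by (simp add: measure_pmf_of_set)
    finally show ?thesis by (simp add: U_def)
  qed
  have sq: "(\<lambda>n. sqrt (2 / (r * real n))) \<longlonglongrightarrow> 0"
  proof -
    have "filterlim (\<lambda>n. r * real n) at_top sequentially"
      using r by (intro filterlim_tendsto_pos_mult_at_top[OF tendsto_const] filterlim_real_sequentially) auto
    then have "(\<lambda>n. 2 / (r * real n)) \<longlonglongrightarrow> 0"
      by (intro tendsto_divide_0[OF tendsto_const] filterlim_at_top_imp_at_infinity)
    then have "(\<lambda>n. sqrt (2 / (r * real n))) \<longlonglongrightarrow> sqrt 0" by (rule tendsto_real_sqrt)
    then show ?thesis by simp
  qed
  show ?thesis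
  proof (rule tendsto_sandwich[of "\<lambda>_. 0" _ sequentially "\<lambda>n. measure_pmf.prob (pmf_of_set (profiles C n)) (E n) + sqrt (2 / (r * real n))"])
    show "\<forall>\<^sub>F n in sequentially. 0 \<le> measure_pmf.prob (pmf_of_set (profiles C n)) {P. score C w n P x = score C w n P y}"
      by simp
    show "\<forall>\<^sub>F n in sequentially. measure_pmf.prob (pmf_of_set (profiles C n)) {P. score C w n P x = score C w n P y}
      \<le> measure_pmf.prob (pmf_of_set (profiles C n)) (E n) + sqrt (2 / (r * real n))"
      using eventually_gt_at_top[of 0] by eventually_elim (rule bound)
    show "(\<lambda>_. 0) \<longlonglongrightarrow> (0::real)" by simp
    show "(\<lambda>n. measure_pmf.prob (pmf_of_set (profiles C n)) (E n) + sqrt (2 / (r * real n))) \<longlonglongrightarrow> 0"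
      using tendsto_add[OF LL sq] by simp
  qed
qed

end

context vs begin

lemma main:
  "(\<lambda>n. measure_pmf.prob (pmf_of_set (profiles C n)) (good_event C w n)) \<longlonglongrightarrow> 1"
proof -
  define c where "c = 1 / (2 * real (card TT))"
  have cTT: "real (card TT) > 0" using finite_TT TT_ne by (simp add: card_gt_0_iff)
  have c0: "c > 0" using cTT by (simp add: c_def)
  define \<delta> where "\<delta> = (if wp < 1 then c * (1 - wp) / 2 else c)"
  have d0: "\<delta> > 0" using c0 wp_le1 by (simp add: \<delta>_def)
  define K0 where "K0 = 2 * real (card TT) / (1 - wp) + 2"
  obtain n0 :: nat where n0: "real n0 \<ge> 2 * K0 / c" using real_arch_simple by blast
  define Lreq where "Lreq n = (if wp < 1 then \<delta> * real n / (1 - wp) + 2 * real (card TT) / (1 - wp) + 2 else \<delta> * real n)" for n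
  have Lok: "Lreq n \<le> c * real n" if "n \<ge> n0" for n
  proof (cases "wp < 1")
    case True
    have pw: "1 - wp > 0" using True by simp
    have "\<delta> * real n / (1 - wp) = c * real n / 2" using True pw by (simp add: \<delta>_def field_simps)
    moreover have "K0 \<le> c * real n / 2"
    proof -
      have "real n \<ge> 2 * K0 / c" using n0 that by linarith
      then have "c * real n \<ge> c * (2 * K0 / c)" using c0 by (intro mult_left_mono) auto
      moreover have "c * (2 * K0 / c) = 2 * K0" using c0 by simp
      ultimately show ?thesis by linarith
    qed
    ultimately show ?thesis using True by (simp add: Lreq_def K0_def)
  next
    case False
    then show ?thesis by (simp add: Lreq_def \<delta>_def)
  qed
  define Pairs where "Pairs = {p \<in> C \<times> C. fst p \<noteq> snd p}"
  have finP: "finite Pairs" using finC by (simp add: Pairs_def)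
  have finCC: "finite (C \<times> C)" using finC by simp
  define B1 where "B1 p n = {P. score C w n P (fst p) = score C w n P (snd p)}" for p n
  define B2 where "B2 (t :: 'c list) n = {P :: nat \<Rightarrow> 'c list. real (Ncount n P t) < real n / (2 * real (card TT))}" for t n
  define B3 where "B3 p n = {P. \<delta> * real n < \<bar>score C w n P (fst p) - score C w n P (snd p)\<bar>}" for p n
  define pr where "pr n A = measure_pmf.prob (pmf_of_set (profiles C n)) A" for n A
  define bound where "bound n = (\<Sum>p\<in>Pairs. pr n (B1 p n)) + (\<Sum>t\<in>TT. pr n (B2 t n)) + (\<Sum>p\<in>C \<times> C. pr n (B3 p n))" for n
  have lim1: "(\<lambda>n. \<Sum>p\<in>Pairs. pr n (B1 p n)) \<longlonglongrightarrow> 0"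
  proof (rule tendsto_null_sum)
    fix p assume "p \<in> Pairs"
    then show "(\<lambda>n. pr n (B1 p n)) \<longlonglongrightarrow> 0"
      using anticonc[of "fst p" "snd p"] by (auto simp: Pairs_def pr_def B1_def)
  qed
  have lim2: "(\<lambda>n. \<Sum>t\<in>TT. pr n (B2 t n)) \<longlonglongrightarrow> 0"
  proof (rule tendsto_null_sum)
    fix t assume "t \<in> TT"
    then show "(\<lambda>n. pr n (B2 t n)) \<longlonglongrightarrow> 0" using count_large[of t] by (simp add: pr_def B2_def)
  qed
  have lim3: "(\<lambda>n. \<Sum>p\<in>C \<times> C. pr n (B3 p n)) \<longlonglongrightarrow> 0"
  proof (rule tendsto_null_sum)
    fix p assume "p \<in> C \<times> C"
    then show "(\<lambda>n. pr n (B3 p n)) \<longlonglongrightarrow> 0"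
      using gap_small[of "fst p" "snd p" \<delta>] d0 by (auto simp: pr_def B3_def)
  qed
  have limb: "bound \<longlonglongrightarrow> 0" unfolding bound_def using tendsto_add[OF tendsto_add[OF lim1 lim2] lim3] by simp
  have low: "1 - bound n \<le> pr n (good_event C w n)" if n: "n \<ge> n0" for n
  proof -
    define B where "B = (\<Union>p\<in>Pairs. B1 p n) \<union> (\<Union>t\<in>TT. B2 t n) \<union> (\<Union>p\<in>C \<times> C. B3 p n)"
    have "pr n B \<le> pr n (\<Union>p\<in>Pairs. B1 p n) + pr n (\<Union>t\<in>TT. B2 t n) + pr n (\<Union>p\<in>C \<times> C. B3 p n)"
      unfolding B_def pr_def
      by (smt (verit, ccfv_threshold) measure_Un_le sets_measure_pmf UNIV_I)
    also have "\<dots> \<le> bound n"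
      unfolding bound_def pr_def
      by (intro add_mono measure_pmf.finite_measure_subadditive_finite finP finite_TT finCC) auto
    finally have pB: "pr n B \<le> bound n" .
    have e: "pr n (UNIV - B) = 1 - pr n B" unfolding pr_def using measure_pmf.prob_compl[of B] by simp
    have m: "pr n (UNIV - B) \<le> pr n (good_event C w n)"
      unfolding pr_def
    proof (rule prob_mono_prof[OF _ finite_profiles profiles_ne])
      fix P assume P: "P \<in> profiles C n" and nB: "P \<in> UNIV - B"
      have inj: "\<forall>al\<in>C. \<forall>be\<in>C. al \<noteq> be \<longrightarrow> score C w n P al \<noteq> score C w n P be"
      proof (intro ballI impI)
        fix al be assume "al \<in> C" "be \<in> C" "al \<noteq> be"
        then have "(al, be) \<in> Pairs" by (simp add: Pairs_def)
        then have "P \<notin> B1 (al, be) n" using nB by (auto simp: B_def)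
        then show "score C w n P al \<noteq> score C w n P be" by (simp add: B1_def)
      qed
      have gap: "\<forall>al\<in>C. \<forall>be\<in>C. \<bar>score C w n P al - score C w n P be\<bar> \<le> \<delta> * real n"
      proof (intro ballI)
        fix al be assume "al \<in> C" "be \<in> C"
        then have "P \<notin> B3 (al, be) n" using nB by (auto simp: B_def)
        then show "\<bar>score C w n P al - score C w n P be\<bar> \<le> \<delta> * real n" by (simp add: B3_def)
      qed
      have NL: "\<forall>t\<in>TT. real (Ncount n P t) \<ge>
         (if wp < 1 then \<delta> * real n / (1 - wp) + 2 * real (card TT) / (1 - wp) + 2 else \<delta> * real n)"
      proof
        fix t assume t: "t \<in> TT"
        then have "P \<notin> B2 t n" using nB by (auto simp: B_def)
        then have "real (Ncount n P t) \<ge> c * real n" by (simp add: B2_def c_def)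
        then show "real (Ncount n P t) \<ge>
         (if wp < 1 then \<delta> * real n / (1 - wp) + 2 * real (card TT) / (1 - wp) + 2 else \<delta> * real n)"
          using Lok[OF n] by (simp add: Lreq_def)
      qed
      show "P \<in> good_event C w n" by (rule good_det[OF P inj gap NL])
    qed
    show ?thesis using e m pB by linarith
  qed
  show ?thesis
  proof (rule tendsto_sandwich[of "\<lambda>n. 1 - bound n" _ sequentially "\<lambda>_. 1"])
    show "\<forall>\<^sub>F n in sequentially. 1 - bound n \<le> measure_pmf.prob (pmf_of_set (profiles C n)) (good_event C w n)"
      using eventually_ge_at_top[of n0] by eventually_elim (use low in \<open>simp add: pr_def\<close>)
    show "\<forall>\<^sub>F n in sequentially. measure_pmf.prob (pmf_of_set (profiles C n)) (good_event C w n) \<le> 1"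
      by simp
    show "(\<lambda>n. 1 - bound n) \<longlonglongrightarrow> 1" using tendsto_diff[OF tendsto_const limb, of 1] by simp
    show "(\<lambda>_. 1) \<longlonglongrightarrow> (1::real)" by simp
  qed
qed

end

theorem corollary6:
  fixes C :: "'c set" and w :: "nat \<Rightarrow> real"
  assumes "finite C" and "card C \<ge> 3"
    and "w 1 = 1" and "w (card C) = 0"
    and "\<And>i j. 1 \<le> i \<Longrightarrow> i \<le> j \<Longrightarrow> j \<le> card C \<Longrightarrow> w j \<le> w i"
  shows "(\<lambda>n. measure_pmf.prob (pmf_of_set (profiles C n)) (good_event C w n))
           \<longlonglongrightarrow> 1"
proof -
  interpret vs C w
    by (rule vs.intro) (use assms in auto)
  show ?thesis by (rule main)
qed

end
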